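(* Let $R$ be a bounded dominant region of $\mathcal A^m_\Phi$ and let $w_R\in W_a$ be the unique element with $r(w_R,\alpha)=r_\alpha(\phi(R))$ for all $\alpha\in\Phi^+$. Then $w_R$ is the unique $w\in W_a$ such that $wA_\circ\subseteq R$ and, whenever $\alpha\in\Phi^+$, $r\in\mathbb Z$ and $(\alpha,x)>r$ holds for some $x\in R$, we have $(\alpha,x)>r$ for all $x\in wA_\circ$.
   Context: $\Phi$ irreducible crystallographic of rank $\ell$ in Euclidean $V$, positive system $\Phi^+$, simple roots $\Pi=\{\sigma_i\}$, highest root $\tilde\alpha$, $m\ge1$. $\mathcal A^m_\Phi$: hyperplanes $H_{\alpha,k}=\{x:(\alpha,x)=k\}$, $\alpha\in\Phi$, $0\le k\le m$; dominant: inside $\{x:(\alpha,x)>0\ \forall\alpha\in\Phi^+\}$. $W_a$: group generated by reflections in all $H_{\alpha,k}$, $k\in\mathbb Z$; $A_\circ=\{x:(\sigma_i,x)>0,\ (\tilde\alpha,x)<1\}$; $r(w,\alpha)$ is the integer $r$ with $r-1<(\alpha,x)<r$ on $wA_\circ$. $\phi(R)$ is the chain $\emptyset=\mathcal J_0\subseteq\cdots\subseteq\mathcal J_m$ with $\mathcal J_r=\{\alpha\in\Phi^+:(\alpha,x)<r \text{ on } R\}$, which is a positive geometric chain of ideals (ideals in the root poset with $(\mathcal J_i+\mathcal J_j)\cap\Phi^+\subseteq\mathcal J_{i+j}$ for $i+j\le m$, the complements $\mathcal I_i$ satisfying $(\mathcal I_i+\mathcal I_j)\cap\Phi^+\subseteq\mathcal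 I_{i+j}$ with $\mathcal I_i=\mathcal I_m$ for $i>m$, and $\Pi\subseteq\mathcal J_m$). For such a chain, $r_\alpha(\mathcal J)=\min\{r_1+\dots+r_k:\alpha=\alpha_1+\dots+\alpha_k,\ \alpha_i\in\mathcal J_{r_i}\}$; there is a unique $w\in W_a$ with $r(w,\alpha)=r_\alpha(\mathcal J)$ for all $\alpha\in\Phi^+$. *)

theory Defs
  imports "HOL-Analysis.Analysis"
begin

definition refl_vec :: "'a::euclidean_space \<Rightarrow> 'a \<Rightarrow> 'a" where
  "refl_vec \<alpha> x = x - ((2 * (\<alpha> \<bullet> x)) / (\<alpha> \<bullet> \<alpha>)) *\<^sub>R \<alpha>"

definition crystallographic_root_system :: "'a::euclidean_space set \<Rightarrow> bool" where
  "crystallographic_root_system \<Phi> \<longleftrightarrow>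
     finite \<Phi> \<and> 0 \<notin> \<Phi> \<and> span \<Phi> = UNIV \<and>
     (\<forall>\<alpha>\<in>\<Phi>. \<forall>\<beta>\<in>\<Phi>. refl_vec \<alpha> \<beta> \<in> \<Phi>) \<and>
     (\<forall>\<alpha>\<in>\<Phi>. \<forall>c::real. c *\<^sub>R \<alpha> \<in> \<Phi> \<longrightarrow> c = 1 \<or> c = -1) \<and>
     (\<forall>\<alpha>\<in>\<Phi>. \<forall>\<beta>\<in>\<Phi>. (2 * (\<alpha> \<bullet> \<beta>)) / (\<alpha> \<bullet> \<alpha>) \<in> \<int>)"

definition irreducible_rs :: "'a::euclidean_space set \<Rightarrow> bool" where
  "irreducible_rs \<Phi> \<longleftrightarrow>
     \<not> (\<exists>A B. A \<union> B = \<Phi> \<and> A \<inter> B = {} \<and> A \<noteq> {} \<and> B \<noteq> {} \<and>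
            (\<forall>\<alpha>\<in>A. \<forall>\<beta>\<in>B. \<alpha> \<bullet> \<beta> = 0))"

definition nnint_comb :: "'a::euclidean_space set \<Rightarrow> 'a \<Rightarrow> bool" where
  "nnint_comb S v \<longleftrightarrow> (\<exists>c. (\<forall>\<sigma>\<in>S. c \<sigma> \<in> \<nat>) \<and> v = (\<Sum>\<sigma>\<in>S. c \<sigma> *\<^sub>R \<sigma>))"

definition simple_system :: "'a::euclidean_space set \<Rightarrow> 'a set \<Rightarrow> bool" where
  "simple_system \<Phi> S \<longleftrightarrow> S \<subseteq> \<Phi> \<and> independent S \<and>
     (\<forall>\<alpha>\<in>\<Phi>. nnint_comb S \<alpha> \<or> nnint_comb S (- \<alpha>))"

definition pos_roots :: "'a::euclidean_space set \<Rightarrow> 'a set \<Rightarrow> 'a set" where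
  "pos_roots \<Phi> S = {\<alpha>\<in>\<Phi>. nnint_comb S \<alpha>}"

definition highest_root :: "'a::euclidean_space set \<Rightarrow> 'a set \<Rightarrow> 'a \<Rightarrow> bool" where
  "highest_root \<Phi> S h \<longleftrightarrow> h \<in> pos_roots \<Phi> S \<and>
     (\<forall>\<beta>\<in>pos_roots \<Phi> S. nnint_comb S (h - \<beta>))"

definition shi_hyperplanes :: "'a::euclidean_space set \<Rightarrow> nat \<Rightarrow> 'a set set" where
  "shi_hyperplanes \<Phi> m = {{x. \<alpha> \<bullet> x = real k} | \<alpha> k. \<alpha> \<in> \<Phi> \<and> k \<le> m}"

definition is_region :: "'a::euclidean_space set \<Rightarrow> nat \<Rightarrow> 'a set \<Rightarrow> bool" where
  "is_region \<Phi> m R \<longleftrightarrow>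
     (\<exists>x. x \<notin> \<Union>(shi_hyperplanes \<Phi> m) \<and>
          R = connected_component_set (- \<Union>(shi_hyperplanes \<Phi> m)) x)"

definition dominant :: "'a::euclidean_space set \<Rightarrow> 'a set \<Rightarrow> 'a set \<Rightarrow> bool" where
  "dominant \<Phi> S R \<longleftrightarrow> R \<subseteq> {x. \<forall>\<alpha>\<in>pos_roots \<Phi> S. \<alpha> \<bullet> x > 0}"

definition aff_refl :: "'a::euclidean_space \<Rightarrow> int \<Rightarrow> 'a \<Rightarrow> 'a" where
  "aff_refl \<alpha> k x = x - (((\<alpha> \<bullet> x) - real_of_int k) * 2 / (\<alpha> \<bullet> \<alpha>)) *\<^sub>R \<alpha>"

text \<open>Group generated by the reflections in all hyperplanes H_{alpha,k}, k integer
  (the reflections are involutions, so closure under left composition suffices).\<close>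
inductive_set affine_weyl :: "'a::euclidean_space set \<Rightarrow> ('a \<Rightarrow> 'a) set" for \<Phi> where
  id_in: "id \<in> affine_weyl \<Phi>"
| refl_comp: "w \<in> affine_weyl \<Phi> \<Longrightarrow> \<alpha> \<in> \<Phi> \<Longrightarrow> aff_refl \<alpha> k \<circ> w \<in> affine_weyl \<Phi>"

definition fund_alcove :: "'a::euclidean_space set \<Rightarrow> 'a \<Rightarrow> 'a set" where
  "fund_alcove S h = {x. (\<forall>\<sigma>\<in>S. \<sigma> \<bullet> x > 0) \<and> h \<bullet> x < 1}"

definition r_of :: "'a::euclidean_space set \<Rightarrow> ('a \<Rightarrow> 'a) \<Rightarrow> 'a \<Rightarrow> int" where
  "r_of A w \<alpha> = (THE r::int. \<forall>x\<in>w ` A. real_of_int r - 1 < \<alpha> \<bullet> x \<and> \<alpha> \<bullet> x < real_of_int r)"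

definition phi_chain :: "'a::euclidean_space set \<Rightarrow> 'a set \<Rightarrow> 'a set \<Rightarrow> nat \<Rightarrow> 'a set" where
  "phi_chain \<Phi> S R r = {\<alpha>\<in>pos_roots \<Phi> S. \<forall>x\<in>R. \<alpha> \<bullet> x < real r}"

text \<open>r_alpha(J) for a chain J_0,...,J_m: minimum of r_1+...+r_k over decompositions
  alpha = alpha_1+...+alpha_k (k >= 1) with alpha_i in J_{r_i}, 0 <= r_i <= m.\<close>
definition r_alpha :: "(nat \<Rightarrow> 'a::euclidean_space set) \<Rightarrow> nat \<Rightarrow> 'a \<Rightarrow> nat" where
  "r_alpha J m \<alpha> = (LEAST n. \<exists>ps :: ('a \<times> nat) list. ps \<noteq> [] \<and>
       (\<forall>(\<beta>, i)\<in>set ps. i \<le> m \<and> \<beta> \<in> J i) \<and>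
       sum_list (map fst ps) = \<alpha> \<and> sum_list (map snd ps) = n)"

end

theory Submission
  imports Defs
begin

locale afw =
  fixes \<Phi> S :: "'a::euclidean_space set" and h :: 'a
  assumes crs: "crystallographic_root_system \<Phi>"
    and ss: "simple_system \<Phi> S" and hr: "highest_root \<Phi> S h"
begin

lemma finPhi: "finite \<Phi>" and zeroPhi: "0 \<notin> \<Phi>" and spanPhi: "span \<Phi> = UNIV"
  and reflPhi: "\<alpha> \<in> \<Phi> \<Longrightarrow> \<beta> \<in> \<Phi> \<Longrightarrow> refl_vec \<alpha> \<beta> \<in> \<Phi>"
  and reducedPhi: "\<alpha> \<in> \<Phi> \<Longrightarrow> c *\<^sub>R \<alpha> \<in> \<Phi> \<Longrightarrow> c = 1 \<or> c = -1"
  and intPhi: "\<alpha> \<in> \<Phi> \<Longrightarrow> \<beta> \<in> \<Phi> \<Longrightarrow> (2 * (\<alpha> \<bullet> \<beta>)) / (\<alpha> \<bullet> \<alpha>) \<in> \<int>"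
  using crs unfolding crystallographic_root_system_def by auto

lemma SsubPhi: "S \<subseteq> \<Phi>" and indepS: "independent S"
  and signS: "\<alpha> \<in> \<Phi> \<Longrightarrow> nnint_comb S \<alpha> \<or> nnint_comb S (- \<alpha>)"
  using ss unfolding simple_system_def by auto

lemma finS: "finite S" using SsubPhi finPhi finite_subset by blast

lemma root_nz: "\<alpha> \<in> \<Phi> \<Longrightarrow> \<alpha> \<noteq> 0" using zeroPhi by auto

lemma root_sq_pos: "\<alpha> \<in> \<Phi> \<Longrightarrow> \<alpha> \<bullet> \<alpha> > 0" using root_nz by auto

lemma negPhi: assumes "\<alpha> \<in> \<Phi>" shows "- \<alpha> \<in> \<Phi>"
proof -
  have "refl_vec \<alpha> \<alpha> = - \<alpha>" using root_sq_pos[OF assms]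
    by (simp add: refl_vec_def algebra_simps scaleR_2)
  then show ?thesis using reflPhi[OF assms assms] by simp
qed

lemma h_in: "h \<in> \<Phi>" "nnint_comb S h" and h_top: "\<And>\<beta>. \<beta> \<in> pos_roots \<Phi> S \<Longrightarrow> nnint_comb S (h - \<beta>)"
  using hr unfolding highest_root_def pos_roots_def by auto

lemma nnint_span: "nnint_comb S v \<Longrightarrow> v \<in> span S"
  unfolding nnint_comb_def by (auto intro: span_sum span_scale span_base)

lemma span_S: "span S = UNIV"
proof -
  have "\<Phi> \<subseteq> span S"
  proof
    fix \<alpha> assume a: "\<alpha> \<in> \<Phi>"
    from signS[OF a] show "\<alpha> \<in> span S"
    proof
      assume "nnint_comb S (- \<alpha>)" then have "- \<alpha> \<in> span S" by (rule nnint_span)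
      then show ?thesis using span_neg by fastforce
    qed (rule nnint_span)
  qed
  then have "span \<Phi> \<subseteq> span S" by (simp add: span_minimal)
  then show ?thesis using spanPhi by auto
qed

lemma dual_exists: assumes "\<sigma> \<in> S"
  shows "\<exists>\<omega>. \<omega> \<bullet> \<sigma> = 1 \<and> (\<forall>\<tau>\<in>S. \<tau> \<noteq> \<sigma> \<longrightarrow> \<omega> \<bullet> \<tau> = 0)"
proof -
  obtain y z where y: "y \<in> span (S - {\<sigma>})" and z: "\<And>w. w \<in> span (S - {\<sigma>}) \<Longrightarrow> orthogonal z w"
    and e: "\<sigma> = y + z"
    using orthogonal_subspace_decomp_exists[of "S - {\<sigma>}" \<sigma>] by metis
  have nin: "\<sigma> \<notin> span (S - {\<sigma>})" using indepS assms unfolding dependent_def by auto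
  have zn: "z \<noteq> 0" using e y nin by auto
  have "z \<bullet> y = 0" using z[OF y] by (simp add: orthogonal_def)
  then have zs: "z \<bullet> \<sigma> = z \<bullet> z" using e by (simp add: inner_add_right)
  have zz: "z \<bullet> z > 0" using zn by simp
  show ?thesis
  proof (intro exI conjI ballI impI)
    show "(inverse (z \<bullet> z) *\<^sub>R z) \<bullet> \<sigma> = 1" using zs zz by simp
    fix \<tau> assume "\<tau> \<in> S" "\<tau> \<noteq> \<sigma>"
    then have "\<tau> \<in> span (S - {\<sigma>})" by (auto intro: span_base)
    then have "z \<bullet> \<tau> = 0" using z by (simp add: orthogonal_def)
    then show "(inverse (z \<bullet> z) *\<^sub>R z) \<bullet> \<tau> = 0" by simp
  qed
qed

definition om :: "'a \<Rightarrow> 'a" where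
  "om \<sigma> = (SOME \<omega>. \<omega> \<bullet> \<sigma> = 1 \<and> (\<forall>\<tau>\<in>S. \<tau> \<noteq> \<sigma> \<longrightarrow> \<omega> \<bullet> \<tau> = 0))"

lemma om: assumes "\<sigma> \<in> S" shows "om \<sigma> \<bullet> \<sigma> = 1" "\<And>\<tau>. \<tau> \<in> S \<Longrightarrow> \<tau> \<noteq> \<sigma> \<Longrightarrow> om \<sigma> \<bullet> \<tau> = 0"
  using someI_ex[OF dual_exists[OF assms]] unfolding om_def by auto

lemma om_sum: assumes "\<sigma> \<in> S" shows "om \<sigma> \<bullet> (\<Sum>\<tau>\<in>S. c \<tau> *\<^sub>R \<tau>) = c \<sigma>"
proof -
  have "om \<sigma> \<bullet> (\<Sum>\<tau>\<in>S. c \<tau> *\<^sub>R \<tau>) = (\<Sum>\<tau>\<in>S. c \<tau> * (om \<sigma> \<bullet> \<tau>))"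
    by (simp add: inner_sum_right)
  also have "\<dots> = (\<Sum>\<tau>\<in>S. if \<tau> = \<sigma> then c \<sigma> else 0)"
    using om[OF assms] by (intro sum.cong) auto
  also have "\<dots> = c \<sigma>" using assms finS by simp
  finally show ?thesis .
qed

definition co :: "'a \<Rightarrow> 'a \<Rightarrow> real" where "co \<sigma> v = om \<sigma> \<bullet> v"

lemma expand: "v = (\<Sum>\<sigma>\<in>S. co \<sigma> v *\<^sub>R \<sigma>)"
proof -
  have "v \<in> span S" using span_S by auto
  then obtain u where u: "v = (\<Sum>\<tau>\<in>S. u \<tau> *\<^sub>R \<tau>)" using span_finite[OF finS] by auto
  have "co \<sigma> v = u \<sigma>" if "\<sigma> \<in> S" for \<sigma> unfolding co_def u using om_sum[OF that] .
  then have "(\<Sum>\<sigma>\<in>S. co \<sigma> v *\<^sub>R \<sigma>) = (\<Sum>\<tau>\<in>S. u \<tau> *\<^sub>R \<tau>)" by (intro sum.cong) auto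
  then show ?thesis using u by simp
qed

lemma co_lin: "co \<sigma> (a + b) = co \<sigma> a + co \<sigma> b" "co \<sigma> (a - b) = co \<sigma> a - co \<sigma> b"
  "co \<sigma> (- a) = - co \<sigma> a" "co \<sigma> (c *\<^sub>R a) = c * co \<sigma> a"
  unfolding co_def by (auto simp: inner_add_right inner_diff_right)

lemma co_simple: "\<sigma> \<in> S \<Longrightarrow> \<tau> \<in> S \<Longrightarrow> co \<sigma> \<tau> = (if \<tau> = \<sigma> then 1 else 0)"
  unfolding co_def using om by auto

lemma nnint_co: assumes "nnint_comb S v" "\<sigma> \<in> S" shows "co \<sigma> v \<in> \<nat>"
proof -
  obtain c where c: "\<forall>\<sigma>\<in>S. c \<sigma> \<in> \<nat>" "v = (\<Sum>\<sigma>\<in>S. c \<sigma> *\<^sub>R \<sigma>)" using assms(1) unfolding nnint_comb_def by auto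
  have "co \<sigma> v = c \<sigma>" unfolding co_def c(2) using om_sum[OF assms(2)] .
  then show ?thesis using c(1) assms(2) by simp
qed

lemma nnint_co_ge: assumes "nnint_comb S v" "\<sigma> \<in> S" shows "co \<sigma> v \<ge> 0"
proof -
  have "co \<sigma> v \<in> \<nat>" using nnint_co[OF assms] .
  then show ?thesis by (cases rule: Nats_cases) auto
qed

lemma inner_expand: "v \<bullet> x = (\<Sum>\<sigma>\<in>S. co \<sigma> v * (\<sigma> \<bullet> x))"
  by (subst expand[of v]) (simp add: inner_sum_left)

end
context afw begin

abbreviation ispos :: "'a \<Rightarrow> bool" where "ispos \<alpha> \<equiv> nnint_comb S \<alpha>"

lemma co_zero_all: assumes "\<forall>\<sigma>\<in>S. co \<sigma> v = 0" shows "v = 0"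
proof -
  have "(\<Sum>\<sigma>\<in>S. co \<sigma> v *\<^sub>R \<sigma>) = 0" using assms by simp
  then show ?thesis using expand[of v] by metis
qed

lemma pos_inner_gt: assumes "ispos \<alpha>" "\<alpha> \<noteq> 0" "\<forall>\<sigma>\<in>S. \<sigma> \<bullet> x > 0" shows "\<alpha> \<bullet> x > 0"
proof -
  obtain \<sigma> where s: "\<sigma> \<in> S" "co \<sigma> \<alpha> \<noteq> 0" using co_zero_all assms(2) by blast
  have "0 < (\<Sum>\<sigma>\<in>S. co \<sigma> \<alpha> * (\<sigma> \<bullet> x))"
  proof (rule sum_pos2[OF finS s(1)])
    show "0 < co \<sigma> \<alpha> * (\<sigma> \<bullet> x)" using s nnint_co_ge[OF assms(1) s(1)] assms(3) by auto
    show "0 \<le> co i \<alpha> * (i \<bullet> x)" if "i \<in> S" for i using nnint_co_ge[OF assms(1) that] assms(3) that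
      by (simp add: less_imp_le)
  qed
  then show ?thesis using inner_expand[of \<alpha> x] by metis
qed

lemma pos_inner_ge: assumes "ispos \<alpha>" "\<forall>\<sigma>\<in>S. \<sigma> \<bullet> x \<ge> 0" shows "\<alpha> \<bullet> x \<ge> 0"
proof -
  have "0 \<le> (\<Sum>\<sigma>\<in>S. co \<sigma> \<alpha> * (\<sigma> \<bullet> x))"
    using nnint_co_ge[OF assms(1)] assms(2) by (intro sum_nonneg) simp
  then show ?thesis using inner_expand[of \<alpha> x] by metis
qed

lemma posroot_h: assumes "\<alpha> \<in> \<Phi>" "ispos \<alpha>" shows "ispos (h - \<alpha>)"
  using h_top assms unfolding pos_roots_def by auto

lemma le_h: assumes "\<alpha> \<in> \<Phi>" "ispos \<alpha>" "\<forall>\<sigma>\<in>S. \<sigma> \<bullet> x \<ge> 0" shows "\<alpha> \<bullet> x \<le> h \<bullet> x"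
  using pos_inner_ge[OF posroot_h[OF assms(1,2)] assms(3)] by (simp add: inner_diff_left)

lemma simple_pos: assumes "\<sigma> \<in> S" shows "ispos \<sigma>"
proof -
  have "(\<Sum>\<tau>\<in>S. (if \<tau> = \<sigma> then 1 else 0) *\<^sub>R \<tau>) = (\<Sum>\<tau>\<in>S. if \<tau> = \<sigma> then \<tau> else 0)"
    by (rule sum.cong) auto
  also have "\<dots> = \<sigma>" using assms finS by (simp add: sum.delta)
  finally show ?thesis unfolding nnint_comb_def
    by (intro exI[of _ "\<lambda>\<tau>. if \<tau> = \<sigma> then 1 else 0"]) auto
qed

definition A :: "'a set" where "A = fund_alcove S h"

lemma inA: assumes "x \<in> A" "\<alpha> \<in> \<Phi>" "ispos \<alpha>" shows "0 < \<alpha> \<bullet> x" "\<alpha> \<bullet> x < 1"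
proof -
  have s: "\<forall>\<sigma>\<in>S. \<sigma> \<bullet> x > 0" "h \<bullet> x < 1" using assms(1) unfolding A_def fund_alcove_def by auto
  show "0 < \<alpha> \<bullet> x" using pos_inner_gt[OF assms(3) root_nz[OF assms(2)] s(1)] .
  show "\<alpha> \<bullet> x < 1" using le_h[OF assms(2,3)] s by (meson less_imp_le order_le_less_trans)
qed

lemma inA_neg: assumes "x \<in> A" "\<alpha> \<in> \<Phi>" "\<not> ispos \<alpha>" shows "-1 < \<alpha> \<bullet> x" "\<alpha> \<bullet> x < 0"
proof -
  have "ispos (-\<alpha>)" using signS[OF assms(2)] assms(3) by auto
  then show "-1 < \<alpha> \<bullet> x" "\<alpha> \<bullet> x < 0" using inA[OF assms(1) negPhi[OF assms(2)]] by auto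
qed

lemma A_intro: assumes "\<forall>\<alpha>\<in>\<Phi>. ispos \<alpha> \<longrightarrow> 0 < \<alpha> \<bullet> x \<and> \<alpha> \<bullet> x < 1" shows "x \<in> A"
  using assms simple_pos SsubPhi h_in unfolding A_def fund_alcove_def by auto

definition rho :: 'a where "rho = (\<Sum>\<sigma>\<in>S. om \<sigma>)"

definition ht :: "'a \<Rightarrow> real" where "ht v = (\<Sum>\<sigma>\<in>S. co \<sigma> v)"

lemma ht_inner: "v \<bullet> rho = ht v"
  unfolding rho_def ht_def co_def by (simp add: inner_sum_right inner_commute)

lemma rho_simple: assumes "\<sigma> \<in> S" shows "\<sigma> \<bullet> rho = 1"
proof -
  have "(\<Sum>\<tau>\<in>S. co \<tau> \<sigma>) = (\<Sum>\<tau>\<in>S. if \<sigma> = \<tau> then 1 else 0)"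
    using co_simple assms by (intro sum.cong) auto
  also have "\<dots> = 1" using assms finS by (simp add: sum.delta)
  finally show ?thesis unfolding ht_inner ht_def .
qed

lemma ht_lin: "ht (a + b) = ht a + ht b" "ht (a - b) = ht a - ht b" "ht (-a) = - ht a"
  unfolding ht_def co_lin by (auto simp: sum.distrib sum_subtractf sum_negf)

lemma ht_int_pos: assumes "ispos v" shows "ht v \<in> \<int>"
  unfolding ht_def using nnint_co[OF assms] Nats_subset_Ints by (intro Ints_sum) auto

lemma ht_int: assumes "\<alpha> \<in> \<Phi>" shows "ht \<alpha> \<in> \<int>"
  using signS[OF assms] ht_int_pos ht_lin(3) by (metis Ints_minus minus_minus)

lemma ht_ge1: assumes "ispos \<alpha>" "\<alpha> \<noteq> 0" shows "ht \<alpha> \<ge> 1"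
proof -
  have "ht \<alpha> = \<alpha> \<bullet> rho" by (simp add: ht_inner)
  also have "\<dots> > 0" using pos_inner_gt[OF assms] rho_simple by simp
  finally have "ht \<alpha> > 0" .
  moreover have "ht \<alpha> \<in> \<int>" using ht_int_pos[OF assms(1)] .
  ultimately show ?thesis by (auto elim!: Ints_cases)
qed

lemma ht_ge0: assumes "ispos \<alpha>" shows "ht \<alpha> \<ge> 0"
  using pos_inner_ge[OF assms, of rho] rho_simple by (simp add: ht_inner)

definition H :: real where "H = ht h"

lemma H_ge1: "H \<ge> 1" unfolding H_def using ht_ge1 h_in root_nz by auto

lemma ht_le_H: assumes "\<alpha> \<in> \<Phi>" "ispos \<alpha>" shows "ht \<alpha> \<le> H"
  using ht_ge0[OF posroot_h[OF assms]] unfolding H_def ht_lin by simp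

lemma ht_eq_H: assumes "\<alpha> \<in> \<Phi>" "ispos \<alpha>" "ht \<alpha> = H" shows "\<alpha> = h"
proof -
  have p: "ispos (h - \<alpha>)" using posroot_h[OF assms(1,2)] .
  have "ht (h - \<alpha>) = 0" using assms(3) unfolding H_def ht_lin by simp
  then have "\<forall>\<sigma>\<in>S. co \<sigma> (h - \<alpha>) = 0" unfolding ht_def
    using sum_nonneg_eq_0_iff[OF finS, of "\<lambda>\<sigma>. co \<sigma> (h - \<alpha>)"] nnint_co_ge[OF p] by simp
  then have "h - \<alpha> = 0" by (rule co_zero_all)
  then show ?thesis by simp
qed

definition c0 :: 'a where "c0 = (1 / (H + 1)) *\<^sub>R rho"

lemma c0_inner: "v \<bullet> c0 = ht v / (H + 1)"
proof -
  have "v \<bullet> c0 = (1 / (H + 1)) * (v \<bullet> rho)" unfolding c0_def by (rule inner_scaleR_right)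
  then show ?thesis by (simp add: ht_inner)
qed

lemma c0_in: "c0 \<in> A"
proof -
  have "\<sigma> \<bullet> c0 > 0" if "\<sigma> \<in> S" for \<sigma>
    using H_ge1 that by (simp add: c0_inner ht_inner[symmetric] rho_simple)
  moreover have "h \<bullet> c0 < 1" using H_ge1 by (simp add: c0_inner H_def[symmetric])
  ultimately show ?thesis unfolding A_def fund_alcove_def by auto
qed

lemma A_ne: "A \<noteq> {}" using c0_in by auto

end

definition ev :: "'a::euclidean_space \<times> int \<Rightarrow> 'a \<Rightarrow> real" where "ev a x = fst a \<bullet> x - of_int (snd a)"
definition sr :: "'a::euclidean_space \<times> int \<Rightarrow> 'a \<Rightarrow> 'a" where "sr a = aff_refl (fst a) (snd a)"
definition cp :: "'a::euclidean_space \<Rightarrow> 'a \<Rightarrow> int" where "cp \<alpha> \<beta> = \<lfloor>2 * (\<alpha> \<bullet> \<beta>) / (\<beta> \<bullet> \<beta>)\<rfloor>"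
definition rr :: "'a::euclidean_space \<times> int \<Rightarrow> 'a \<times> int \<Rightarrow> 'a \<times> int" where
  "rr b a = (refl_vec (fst b) (fst a), snd a - snd b * cp (fst a) (fst b))"
definition ng :: "'a::euclidean_space \<times> int \<Rightarrow> 'a \<times> int" where "ng a = (- fst a, - snd a)"

fun wd :: "('a::euclidean_space \<times> int) list \<Rightarrow> 'a \<Rightarrow> 'a" where
  "wd [] = id" | "wd (b # bs) = sr b \<circ> wd bs"
fun pull :: "('a::euclidean_space \<times> int) list \<Rightarrow> 'a \<times> int \<Rightarrow> 'a \<times> int" where
  "pull [] a = a" | "pull (b # bs) a = pull bs (rr b a)"
fun cj :: "('a::euclidean_space \<times> int) list \<Rightarrow> 'a \<times> int \<Rightarrow> 'a \<times> int" where
  "cj [] a = a" | "cj (b # bs) a = rr b (cj bs a)"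

lemma sr_formula: "sr a y = y - (ev a y * 2 / (fst a \<bullet> fst a)) *\<^sub>R fst a"
  unfolding sr_def aff_refl_def ev_def by simp

lemma ev_inj: assumes "ev a = ev a'" shows "a = a'"
proof -
  have k: "snd a = snd a'" using fun_cong[OF assms, of 0] by (simp add: ev_def)
  have "fst a \<bullet> x = fst a' \<bullet> x" for x using fun_cong[OF assms, of x] k by (simp add: ev_def)
  then have "(fst a - fst a') \<bullet> (fst a - fst a') = 0" by (simp add: inner_diff_left)
  then have "fst a = fst a'" by simp
  with k show ?thesis by (simp add: prod_eq_iff)
qed

lemma ev_ng: "ev (ng a) x = - ev a x" unfolding ev_def ng_def by simp

lemma sr_ng: "sr (ng a) = sr a"
proof (rule ext)
  fix x
  have "((- fst a) \<bullet> x - of_int (- snd a)) * 2 / ((- fst a) \<bullet> (- fst a)) = - ((fst a \<bullet> x - of_int (snd a)) * 2 / (fst a \<bullet> fst a))"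
    by (simp add: diff_divide_distrib)
  then show "sr (ng a) x = sr a x" unfolding sr_def aff_refl_def ng_def by simp
qed

lemma ev_sub: "ev b (y - s *\<^sub>R fst b) = ev b y - s * (fst b \<bullet> fst b)"
  unfolding ev_def by (simp add: inner_diff_right)

lemma ng_ng: "ng (ng a) = a" unfolding ng_def by simp

lemma ev_affine: "ev a ((1 - t) *\<^sub>R p + t *\<^sub>R q) = (1 - t) * ev a p + t * ev a q"
  unfolding ev_def by (simp add: inner_add_right algebra_simps)

lemma wd_Cons_app: "wd (b # bs) x = sr b (wd bs x)" by simp

lemma wd_append: "wd (xs @ ys) x = wd xs (wd ys x)"
  by (induction xs) auto

lemma int_between: assumes "(0::real) < t" "t < 1" shows "t - of_int k > 0 \<longleftrightarrow> k \<le> 0"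
proof (cases "k \<le> 0")
  case True
  then have "real_of_int k \<le> 0" by simp
  then show ?thesis using True assms by simp
next
  case False
  then have "real_of_int k \<ge> 1" by simp
  then show ?thesis using False assms by simp
qed

lemma int_between2: assumes "(-1::real) < t" "t < 0" shows "t - of_int k > 0 \<longleftrightarrow> k \<le> -1"
proof (cases "k \<le> -1")
  case True
  then have "real_of_int k \<le> -1" by simp
  then show ?thesis using True assms by simp
next
  case False
  then have "real_of_int k \<ge> 0" by simp
  then show ?thesis using False assms by simp
qed

lemma int_nz: assumes "(0::real) < t" "t < 1" shows "t - of_int k \<noteq> 0"
proof (cases "k \<le> 0")
  case True
  then have "real_of_int k \<le> 0" by simp
  then show ?thesis using assms by simp
next
  case False
  then have "real_of_int k \<ge> 1" by simp
  then show ?thesis using assms by simp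
qed

context afw begin

definition AR :: "('a \<times> int) set" where "AR = \<Phi> \<times> UNIV"

lemma AR_iff: "a \<in> AR \<longleftrightarrow> fst a \<in> \<Phi>" unfolding AR_def by (cases a) auto

lemma cp_eq: assumes "\<alpha> \<in> \<Phi>" "\<beta> \<in> \<Phi>" shows "of_int (cp \<alpha> \<beta>) = 2 * (\<alpha> \<bullet> \<beta>) / (\<beta> \<bullet> \<beta>)"
proof -
  have "2 * (\<alpha> \<bullet> \<beta>) / (\<beta> \<bullet> \<beta>) \<in> \<int>" using intPhi[OF assms(2,1)] by (simp add: inner_commute)
  then show ?thesis unfolding cp_def by (metis Ints_cases floor_of_int)
qed

lemma rr_AR: "a \<in> AR \<Longrightarrow> b \<in> AR \<Longrightarrow> rr b a \<in> AR"
  unfolding AR_iff rr_def using reflPhi by auto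

lemma ng_AR: "a \<in> AR \<Longrightarrow> ng a \<in> AR"
  unfolding AR_iff ng_def using negPhi by auto

lemma ev_rr_lin: assumes "a \<in> AR" "b \<in> AR"
  shows "ev (rr b a) x = ev a x - of_int (cp (fst a) (fst b)) * ev b x"
proof -
  obtain \<alpha> k \<beta> j where ab: "a = (\<alpha>, k)" "b = (\<beta>, j)" by (cases a, cases b)
  have r: "\<alpha> \<in> \<Phi>" "\<beta> \<in> \<Phi>" using assms ab by (auto simp: AR_iff)
  define c where "c = 2 * (\<alpha> \<bullet> \<beta>) / (\<beta> \<bullet> \<beta>)"
  have cc: "of_int (cp \<alpha> \<beta>) = c" using cp_eq[OF r] c_def by simp
  have "refl_vec \<beta> \<alpha> = \<alpha> - c *\<^sub>R \<beta>" unfolding refl_vec_def c_def by (simp add: inner_commute)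
  then have rv: "refl_vec \<beta> \<alpha> \<bullet> x = \<alpha> \<bullet> x - c * (\<beta> \<bullet> x)" by (simp add: inner_diff_left)
  show ?thesis unfolding ab rr_def ev_def using cc rv
    by (simp add: algebra_simps)
qed

lemma ev_sr: assumes "a \<in> AR" "b \<in> AR" shows "ev a (sr b x) = ev (rr b a) x"
proof -
  obtain \<alpha> k \<beta> j where ab: "a = (\<alpha>, k)" "b = (\<beta>, j)" by (cases a, cases b)
  have r: "\<alpha> \<in> \<Phi>" "\<beta> \<in> \<Phi>" using assms ab by (auto simp: AR_iff)
  have bb: "\<beta> \<bullet> \<beta> \<noteq> 0" using root_sq_pos[OF r(2)] by simp
  define c where "c = 2 * (\<alpha> \<bullet> \<beta>) / (\<beta> \<bullet> \<beta>)"
  have "ev a (sr b x) = \<alpha> \<bullet> x - ((\<beta> \<bullet> x - of_int j) * 2 / (\<beta> \<bullet> \<beta>)) * (\<alpha> \<bullet> \<beta>) - of_int k"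
    unfolding ab ev_def sr_def aff_refl_def by (simp add: inner_diff_right)
  also have "\<dots> = \<alpha> \<bullet> x - of_int k - c * (\<beta> \<bullet> x - of_int j)"
    unfolding c_def using bb by (simp add: field_simps)
  also have "\<dots> = ev a x - c * ev b x" unfolding ab ev_def by simp
  also have "\<dots> = ev (rr b a) x" using ev_rr_lin[OF assms] cp_eq[OF r] c_def ab by simp
  finally show ?thesis .
qed

lemma ev_sr_self: assumes "b \<in> AR" shows "ev b (sr b x) = - ev b x"
proof -
  have bb: "fst b \<bullet> fst b \<noteq> 0" using root_sq_pos assms by (auto simp: AR_iff)
  have "ev b (sr b x) = ev b x - (ev b x * 2 / (fst b \<bullet> fst b)) * (fst b \<bullet> fst b)"
    unfolding sr_formula[of b x] by (rule ev_sub)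
  also have "\<dots> = - ev b x" using bb by simp
  finally show ?thesis .
qed

lemma sr_invol: assumes "b \<in> AR" shows "sr b (sr b x) = x"
proof -
  have "sr b (sr b x) = sr b x - (ev b (sr b x) * 2 / (fst b \<bullet> fst b)) *\<^sub>R fst b"
    by (rule sr_formula)
  also have "\<dots> = sr b x + (ev b x * 2 / (fst b \<bullet> fst b)) *\<^sub>R fst b"
    using ev_sr_self[OF assms] by simp
  also have "\<dots> = x" by (simp add: sr_formula[of b x])
  finally show ?thesis .
qed

lemma rr_invol: assumes "a \<in> AR" "b \<in> AR" shows "rr b (rr b a) = a"
proof (rule ev_inj, rule ext)
  fix x
  have "ev (rr b (rr b a)) x = ev (rr b a) (sr b x)" using ev_sr[OF rr_AR[OF assms] assms(2)] by simp
  also have "\<dots> = ev a (sr b (sr b x))" using ev_sr[OF assms] by simp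
  also have "\<dots> = ev a x" using sr_invol[OF assms(2)] by simp
  finally show "ev (rr b (rr b a)) x = ev a x" .
qed

lemma rr_self: assumes "b \<in> AR" shows "rr b b = ng b"
proof (rule ev_inj, rule ext)
  fix x
  have "ev (rr b b) x = ev b (sr b x)" using ev_sr[OF assms assms] by simp
  also have "\<dots> = - ev b x" by (rule ev_sr_self[OF assms])
  also have "\<dots> = ev (ng b) x" by (simp add: ev_ng)
  finally show "ev (rr b b) x = ev (ng b) x" .
qed

lemma rr_ng: assumes "a \<in> AR" "b \<in> AR" shows "rr b (ng a) = ng (rr b a)"
proof (rule ev_inj, rule ext)
  fix x
  have "ev (rr b (ng a)) x = ev (ng a) (sr b x)" using ev_sr[OF ng_AR[OF assms(1)] assms(2)] by simp
  also have "\<dots> = - ev a (sr b x)" by (simp add: ev_ng)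
  also have "\<dots> = - ev (rr b a) x" using ev_sr[OF assms] by simp
  also have "\<dots> = ev (ng (rr b a)) x" by (simp add: ev_ng)
  finally show "ev (rr b (ng a)) x = ev (ng (rr b a)) x" .
qed

lemma refl_norm: assumes "\<beta> \<noteq> 0" shows "refl_vec \<beta> \<alpha> \<bullet> refl_vec \<beta> \<alpha> = \<alpha> \<bullet> \<alpha>"
proof -
  have bb: "\<beta> \<bullet> \<beta> \<noteq> 0" using assms by simp
  show ?thesis unfolding refl_vec_def using bb
    by (simp add: inner_diff_left inner_diff_right inner_commute power2_eq_square field_simps)
qed

lemma sr_lin: "sr b (y - t *\<^sub>R \<alpha>) = sr b y - t *\<^sub>R refl_vec (fst b) \<alpha>"
  unfolding sr_def aff_refl_def refl_vec_def
  by (simp add: inner_diff_right algebra_simps inner_commute diff_divide_distrib add_divide_distrib)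

lemma conj3: assumes "a \<in> AR" "b \<in> AR" shows "sr b (sr a (sr b x)) = sr (rr b a) x"
proof -
  have nb: "fst b \<noteq> 0" using assms root_nz by (auto simp: AR_iff)
  let ?y = "sr b x"
  have "sr b (sr a (sr b x)) = sr b (?y - (ev a ?y * 2 / (fst a \<bullet> fst a)) *\<^sub>R fst a)"
    by (simp add: sr_formula[of a])
  also have "\<dots> = x - (ev a ?y * 2 / (fst a \<bullet> fst a)) *\<^sub>R refl_vec (fst b) (fst a)"
    by (simp only: sr_lin sr_invol[OF assms(2)])
  also have "\<dots> = sr (rr b a) x"
    unfolding sr_formula[of "rr b a"] using ev_sr[OF assms] refl_norm[OF nb] by (simp add: rr_def)
  finally show ?thesis .
qed

lemma wd_rev1: "set bs \<subseteq> AR \<Longrightarrow> wd (rev bs) (wd bs x) = x"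
proof (induction bs arbitrary: x)
  case (Cons b bs)
  then show ?case using sr_invol[of b] by (simp add: wd_append)
qed simp

lemma wd_rev2: "set bs \<subseteq> AR \<Longrightarrow> wd bs (wd (rev bs) x) = x"
proof (induction bs arbitrary: x)
  case (Cons b bs)
  then show ?case using sr_invol[of b] by (simp add: wd_append)
qed simp

lemma pull_AR: "set bs \<subseteq> AR \<Longrightarrow> a \<in> AR \<Longrightarrow> pull bs a \<in> AR"
proof (induction bs arbitrary: a)
  case (Cons b bs)
  then show ?case by (simp add: rr_AR)
qed simp

lemma cj_AR: "set bs \<subseteq> AR \<Longrightarrow> a \<in> AR \<Longrightarrow> cj bs a \<in> AR"
proof (induction bs arbitrary: a)
  case (Cons b bs)
  then show ?case by (simp add: rr_AR)
qed simp

lemma ev_wd: "set bs \<subseteq> AR \<Longrightarrow> a \<in> AR \<Longrightarrow> ev a (wd bs x) = ev (pull bs a) x"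
proof (induction bs arbitrary: a)
  case (Cons b bs)
  then show ?case using ev_sr[of a b] rr_AR[of a b] by simp
qed simp

lemma pull_cj: "set p \<subseteq> AR \<Longrightarrow> b \<in> AR \<Longrightarrow> pull p (cj p b) = b"
proof (induction p arbitrary: b)
  case (Cons c p)
  then show ?case using rr_invol[OF cj_AR[of p b]] by simp
qed simp

lemma cj_pull: "set p \<subseteq> AR \<Longrightarrow> a \<in> AR \<Longrightarrow> cj p (pull p a) = a"
proof (induction p arbitrary: a)
  case (Cons c p)
  then show ?case using rr_invol[of a c] rr_AR[of a c] by simp
qed simp

lemma pull_ng: "set p \<subseteq> AR \<Longrightarrow> a \<in> AR \<Longrightarrow> pull p (ng a) = ng (pull p a)"
proof (induction p arbitrary: a)
  case (Cons c p)
  then show ?case using rr_ng[of a c] rr_AR[of a c] by simp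
qed simp

lemma conj_wd: "set p \<subseteq> AR \<Longrightarrow> c \<in> AR \<Longrightarrow> wd p (sr c (wd (rev p) x)) = sr (cj p c) x"
proof (induction p arbitrary: x)
  case (Cons d p)
  then have "wd (d # p) (sr c (wd (rev (d # p)) x)) = sr d (wd p (sr c (wd (rev p) (sr d x))))"
    by (simp add: wd_append)
  also have "\<dots> = sr (cj (d # p) c) x" using Cons conj3[OF cj_AR[of p c], of d] by simp
  finally show ?case .
qed simp

lemma weyl_words: "w \<in> affine_weyl \<Phi> \<Longrightarrow> \<exists>ws. set ws \<subseteq> AR \<and> w = wd ws"
proof (induction rule: affine_weyl.induct)
  case id_in
  then show ?case by (intro exI[of _ "[]"]) simp
next
  case (refl_comp w \<alpha> k)
  then obtain ws where "set ws \<subseteq> AR" "w = wd ws" by auto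
  then show ?case using refl_comp by (intro exI[of _ "(\<alpha>, k) # ws"]) (auto simp: AR_iff sr_def)
qed

lemma evA_pos_iff: assumes "a \<in> AR" "x \<in> A"
  shows "ev a x > 0 \<longleftrightarrow> (if ispos (fst a) then snd a \<le> 0 else snd a \<le> -1)"
proof (cases "ispos (fst a)")
  case True
  then show ?thesis using inA[OF assms(2), of "fst a"] assms int_between[of "fst a \<bullet> x" "snd a"]
    by (simp add: ev_def AR_iff)
next
  case False
  then show ?thesis using inA_neg[OF assms(2), of "fst a"] assms int_between2[of "fst a \<bullet> x" "snd a"]
    by (simp add: AR_iff ev_def)
qed

lemma evA_nz: assumes "a \<in> AR" "x \<in> A" shows "ev a x \<noteq> 0"
proof (cases "ispos (fst a)")
  case True
  then have "0 < fst a \<bullet> x" "fst a \<bullet> x < 1" using inA[OF assms(2), of "fst a"] assms by (auto simp: AR_iff)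
  then show ?thesis unfolding ev_def by (rule int_nz)
next
  case False
  then have "0 < fst a \<bullet> x + 1" "fst a \<bullet> x + 1 < 1" using inA_neg[OF assms(2), of "fst a"] assms by (auto simp: AR_iff)
  from int_nz[OF this, of "snd a + 1"] show ?thesis unfolding ev_def by simp
qed

lemma evA_sign: assumes "a \<in> AR" "x \<in> A" "y \<in> A" shows "ev a x > 0 \<longleftrightarrow> ev a y > 0"
  using evA_pos_iff[OF assms(1,2)] evA_pos_iff[OF assms(1,3)] by simp

end
context afw begin

definition SA :: "('a \<times> int) set" where "SA = (\<lambda>\<sigma>. (\<sigma>, 0)) ` S \<union> {(- h, -1)}"

lemma SA_AR: "SA \<subseteq> AR" unfolding SA_def using SsubPhi negPhi h_in by (auto simp: AR_iff)

lemma H_int: "H \<in> \<int>" unfolding H_def using ht_int h_in by simp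

lemma h_c0: "h \<bullet> c0 < 1" using c0_in unfolding A_def fund_alcove_def by auto

lemma S_c0: "\<sigma> \<in> S \<Longrightarrow> \<sigma> \<bullet> c0 > 0" using c0_in unfolding A_def fund_alcove_def by auto

lemma SA_c0: "b \<in> SA \<Longrightarrow> ev b c0 > 0"
  unfolding SA_def ev_def using S_c0 h_c0 by auto

lemma pos_q_ge: assumes "ispos v" "\<forall>\<tau>\<in>S. \<tau> \<bullet> q \<ge> 0" shows "v \<bullet> q \<ge> 0"
  using pos_inner_ge[OF assms] .

lemma in_A_comb: assumes "\<forall>\<tau>\<in>S. \<tau> \<bullet> q \<ge> 0" "h \<bullet> q \<le> 1" "0 < t" "t \<le> 1"
  shows "(1 - t) *\<^sub>R q + t *\<^sub>R c0 \<in> A"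
proof -
  have "\<tau> \<bullet> ((1 - t) *\<^sub>R q + t *\<^sub>R c0) > 0" if "\<tau> \<in> S" for \<tau>
  proof -
    have "(1 - t) * (\<tau> \<bullet> q) \<ge> 0" using assms that by simp
    moreover have "t * (\<tau> \<bullet> c0) > 0" using S_c0[OF that] assms by simp
    ultimately show ?thesis by (simp add: inner_add_right)
  qed
  moreover have "h \<bullet> ((1 - t) *\<^sub>R q + t *\<^sub>R c0) < 1"
  proof -
    have "(1 - t) * (h \<bullet> q) \<le> (1 - t)" using assms by (simp add: mult_left_le)
    moreover have "t * (h \<bullet> c0) < t" using h_c0 assms by simp
    ultimately show ?thesis by (simp add: inner_add_right)
  qed
  ultimately show ?thesis unfolding A_def fund_alcove_def by auto
qed

lemma pos_or_neg: assumes "\<alpha> \<in> \<Phi>" "\<not> ispos \<alpha>" shows "ispos (- \<alpha>)" "- \<alpha> \<in> \<Phi>"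
  using signS[OF assms(1)] assms negPhi by auto

lemma facet_simple: assumes "\<sigma>0 \<in> S"
  shows "\<exists>q0. ev (\<sigma>0, 0) q0 = 0 \<and> (\<forall>\<tau>\<in>S. \<tau> \<bullet> q0 \<ge> 0) \<and> h \<bullet> q0 \<le> 1 \<and>
    (\<forall>a\<in>AR. ev a c0 > 0 \<longrightarrow> a \<noteq> (\<sigma>0, 0) \<longrightarrow> ev a q0 > 0)"
proof -
  define q0 where "q0 = (1 / (H + 1)) *\<^sub>R (\<Sum>\<sigma>\<in>S - {\<sigma>0}. om \<sigma>)"
  have Hp: "H + 1 > 0" using H_ge1 by simp
  have qi: "v \<bullet> q0 = (\<Sum>\<sigma>\<in>S - {\<sigma>0}. co \<sigma> v) / (H + 1)" for v
    unfolding q0_def co_def by (simp add: inner_sum_right inner_commute)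
  have tq: "\<tau> \<bullet> q0 = (if \<tau> = \<sigma>0 then 0 else 1 / (H + 1))" if "\<tau> \<in> S" for \<tau>
  proof -
    have "(\<Sum>\<sigma>\<in>S - {\<sigma>0}. co \<sigma> \<tau>) = (\<Sum>\<sigma>\<in>S - {\<sigma>0}. if \<tau> = \<sigma> then 1 else 0)"
      using co_simple that by (intro sum.cong) auto
    also have "\<dots> = (if \<tau> = \<sigma>0 then 0 else 1)" using finS that by (simp add: sum.delta)
    finally show ?thesis unfolding qi by simp
  qed
  have tq0: "\<forall>\<tau>\<in>S. \<tau> \<bullet> q0 \<ge> 0" using tq Hp by simp
  have "(\<Sum>\<sigma>\<in>S - {\<sigma>0}. co \<sigma> h) \<le> (\<Sum>\<sigma>\<in>S. co \<sigma> h)"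
    using nnint_co_ge[OF h_in(2)] finS by (intro sum_mono2) auto
  then have hq: "h \<bullet> q0 < 1" unfolding qi using Hp by (simp add: H_def ht_def)
  have ev0: "ev (\<sigma>0, 0) q0 = 0" using tq[OF assms] by (simp add: ev_def)
  have main: "ev a q0 > 0" if a: "a \<in> AR" "ev a c0 > 0" "a \<noteq> (\<sigma>0, 0)" for a
  proof -
    obtain \<alpha> k where ak: "a = (\<alpha>, k)" by (cases a)
    have al: "\<alpha> \<in> \<Phi>" using a ak by (simp add: AR_iff)
    show ?thesis
    proof (cases "ispos \<alpha>")
      case True
      then have k: "k \<le> 0" using evA_pos_iff[OF a(1) c0_in] a(2) ak by simp
      have aq: "\<alpha> \<bullet> q0 \<ge> 0" using pos_q_ge[OF True tq0] .
      show ?thesis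
      proof (cases "k < 0")
        case True
        then have "real_of_int k \<le> -1" by simp
        then show ?thesis using aq ak by (simp add: ev_def)
      next
        case False
        then have k0: "k = 0" using k by simp
        show ?thesis
        proof (rule ccontr)
          assume "\<not> ?thesis"
          then have "\<alpha> \<bullet> q0 = 0" using aq ak k0 by (simp add: ev_def)
          then have s0: "(\<Sum>\<sigma>\<in>S - {\<sigma>0}. co \<sigma> \<alpha>) = 0" unfolding qi using Hp by simp
          have z: "\<forall>\<sigma>\<in>S - {\<sigma>0}. co \<sigma> \<alpha> = 0"
            using sum_nonneg_eq_0_iff[of "S - {\<sigma>0}" "\<lambda>\<sigma>. co \<sigma> \<alpha>"] s0 finS nnint_co_ge[OF True] by simp
          have "\<alpha> = (\<Sum>\<sigma>\<in>S. co \<sigma> \<alpha> *\<^sub>R \<sigma>)" by (rule expand)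
          also have "\<dots> = co \<sigma>0 \<alpha> *\<^sub>R \<sigma>0 + (\<Sum>\<sigma>\<in>S - {\<sigma>0}. co \<sigma> \<alpha> *\<^sub>R \<sigma>)"
            using finS assms by (simp add: sum.remove)
          also have "(\<Sum>\<sigma>\<in>S - {\<sigma>0}. co \<sigma> \<alpha> *\<^sub>R \<sigma>) = 0" using z by simp
          finally have e: "\<alpha> = co \<sigma>0 \<alpha> *\<^sub>R \<sigma>0" by simp
          have "co \<sigma>0 \<alpha> = 1 \<or> co \<sigma>0 \<alpha> = -1"
            using reducedPhi[of \<sigma>0 "co \<sigma>0 \<alpha>"] SsubPhi assms al e by auto
          then have "co \<sigma>0 \<alpha> = 1" using nnint_co_ge[OF True assms] by auto
          then have "\<alpha> = \<sigma>0" using e by simp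
          then show False using a(3) ak k0 by simp
        qed
      qed
    next
      case False
      have k: "k \<le> -1" using evA_pos_iff[OF a(1) c0_in] a(2) ak False by simp
      have g: "ispos (- \<alpha>)" "- \<alpha> \<in> \<Phi>" using pos_or_neg[OF al False] by auto
      have "(- \<alpha>) \<bullet> q0 \<le> h \<bullet> q0" using le_h[OF g(2,1) tq0] .
      then have "\<alpha> \<bullet> q0 > -1" using hq by simp
      moreover have "real_of_int k \<le> -1" using k by simp
      ultimately show ?thesis using ak by (simp add: ev_def)
    qed
  qed
  show ?thesis using ev0 tq0 hq main by (intro exI[of _ q0]) auto
qed

lemma facet_top:
  shows "\<exists>q0. ev (- h, -1) q0 = 0 \<and> (\<forall>\<tau>\<in>S. \<tau> \<bullet> q0 \<ge> 0) \<and> h \<bullet> q0 \<le> 1 \<and>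
    (\<forall>a\<in>AR. ev a c0 > 0 \<longrightarrow> a \<noteq> (- h, -1) \<longrightarrow> ev a q0 > 0)"
proof -
  define q0 where "q0 = (1 / H) *\<^sub>R rho"
  have Hp: "H > 0" using H_ge1 by simp
  have qi: "v \<bullet> q0 = ht v / H" for v unfolding q0_def by (simp add: ht_inner)
  have tq0: "\<forall>\<tau>\<in>S. \<tau> \<bullet> q0 \<ge> 0" using qi rho_simple Hp by (simp add: ht_inner[symmetric])
  have hq: "h \<bullet> q0 = 1" unfolding qi using Hp by (simp add: H_def)
  have ev0: "ev (- h, -1) q0 = 0" using hq by (simp add: ev_def)
  have main: "ev a q0 > 0" if a: "a \<in> AR" "ev a c0 > 0" "a \<noteq> (- h, -1)" for a
  proof -
    obtain \<alpha> k where ak: "a = (\<alpha>, k)" by (cases a)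
    have al: "\<alpha> \<in> \<Phi>" using a ak by (simp add: AR_iff)
    show ?thesis
    proof (cases "ispos \<alpha>")
      case True
      then have k: "k \<le> 0" using evA_pos_iff[OF a(1) c0_in] a(2) ak by simp
      have "ht \<alpha> \<ge> 1" using ht_ge1[OF True root_nz[OF al]] .
      then have "\<alpha> \<bullet> q0 > 0" unfolding qi using Hp by simp
      moreover have "real_of_int k \<le> 0" using k by simp
      ultimately show ?thesis using ak by (simp add: ev_def)
    next
      case False
      have k: "k \<le> -1" using evA_pos_iff[OF a(1) c0_in] a(2) ak False by simp
      have g: "ispos (- \<alpha>)" "- \<alpha> \<in> \<Phi>" using pos_or_neg[OF al False] by auto
      have le: "ht (- \<alpha>) \<le> H" using ht_le_H[OF g(2,1)] .
      have aq: "\<alpha> \<bullet> q0 = - (ht (- \<alpha>) / H)" unfolding qi ht_lin by simp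
      show ?thesis
      proof (cases "k = -1")
        case True
        have "ht (- \<alpha>) \<noteq> H"
        proof
          assume "ht (- \<alpha>) = H"
          then have "- \<alpha> = h" using ht_eq_H[OF g(2,1)] by simp
          then show False using a(3) ak True by auto
        qed
        then have "ht (- \<alpha>) < H" using le by simp
        then have "ht (- \<alpha>) / H < 1" using Hp by simp
        then show ?thesis using ak True aq by (simp add: ev_def)
      next
        case False
        then have "real_of_int k \<le> -2" using k by simp
        moreover have "ht (- \<alpha>) / H \<le> 1" using le Hp by simp
        ultimately show ?thesis using ak aq by (simp add: ev_def)
      qed
    qed
  qed
  show ?thesis using ev0 tq0 hq main by (intro exI[of _ q0]) auto
qed

lemma facet: assumes "b \<in> SA"
  shows "\<exists>q0. ev b q0 = 0 \<and> (\<forall>\<tau>\<in>S. \<tau> \<bullet> q0 \<ge> 0) \<and> h \<bullet> q0 \<le> 1 \<and>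
    (\<forall>a\<in>AR. ev a c0 > 0 \<longrightarrow> a \<noteq> b \<longrightarrow> ev a q0 > 0)"
  using assms facet_simple facet_top unfolding SA_def by auto

lemma rr_pos: assumes b: "b \<in> SA" and a: "a \<in> AR" "ev a c0 > 0" "a \<noteq> b"
  shows "ev (rr b a) c0 > 0"
proof (rule ccontr)
  assume neg: "\<not> ?thesis"
  obtain q0 where q: "ev b q0 = 0" "\<forall>\<tau>\<in>S. \<tau> \<bullet> q0 \<ge> 0" "h \<bullet> q0 \<le> 1"
    "\<forall>a\<in>AR. ev a c0 > 0 \<longrightarrow> a \<noteq> b \<longrightarrow> ev a q0 > 0" using facet[OF b] by blast
  have bA: "b \<in> AR" using b SA_AR by auto
  have rA: "rr b a \<in> AR" using rr_AR[OF a(1) bA] .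
  have sq: "sr b q0 = q0" using q(1) by (simp add: sr_formula)
  define F where "F = ev (rr b a) q0"
  define G where "G = ev (rr b a) c0"
  have "ev a q0 > 0" using q(4) a by blast
  then have F: "F > 0" unfolding F_def using ev_sr[OF a(1) bA, of q0] sq by simp
  have G: "G < 0" using neg evA_nz[OF rA c0_in] unfolding G_def by linarith
  define t where "t = F / (F - G)"
  have t: "0 < t" "t \<le> 1" using F G unfolding t_def by (auto simp: divide_simps)
  have pA: "(1 - t) *\<^sub>R q0 + t *\<^sub>R c0 \<in> A" using in_A_comb[OF q(2,3) t] .
  have "ev (rr b a) ((1 - t) *\<^sub>R q0 + t *\<^sub>R c0) = (1 - t) * F + t * G"
    unfolding F_def G_def by (rule ev_affine)
  also have "\<dots> = 0" unfolding t_def using F G by (simp add: field_simps)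
  finally show False using evA_nz[OF rA pA] by simp
qed

end
context afw begin

lemma exists_b: assumes "\<alpha> \<in> \<Phi>" shows "\<exists>b\<in>SA. \<alpha> \<bullet> fst b > 0"
proof (rule ccontr)
  assume "\<not> ?thesis"
  then have le: "\<forall>b\<in>SA. \<alpha> \<bullet> fst b \<le> 0" by auto
  have leS: "\<sigma> \<bullet> \<alpha> \<le> 0" if "\<sigma> \<in> S" for \<sigma> using le that unfolding SA_def by (auto simp: inner_commute)
  have leh: "(- h) \<bullet> \<alpha> \<le> 0" using le unfolding SA_def by (auto simp: inner_commute)
  have pos: "\<alpha> \<bullet> \<alpha> > 0" using root_sq_pos[OF assms] .
  show False
  proof (cases "ispos \<alpha>")
    case True
    have "\<alpha> \<bullet> \<alpha> = (\<Sum>\<sigma>\<in>S. co \<sigma> \<alpha> * (\<sigma> \<bullet> \<alpha>))" by (rule inner_expand)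
    also have "\<dots> \<le> 0" using nnint_co_ge[OF True] leS by (intro sum_nonpos) (simp add: mult_nonneg_nonpos)
    finally show False using pos by simp
  next
    case False
    have g: "ispos (- \<alpha>)" "- \<alpha> \<in> \<Phi>" using pos_or_neg[OF assms False] by auto
    have p: "ispos (h + \<alpha>)" using posroot_h[OF g(2,1)] by simp
    have "\<alpha> = (- h) + (h + \<alpha>)" by simp
    then have e1: "\<alpha> \<bullet> \<alpha> = (- h) \<bullet> \<alpha> + (h + \<alpha>) \<bullet> \<alpha>" by (metis inner_add_left)
    have "(h + \<alpha>) \<bullet> \<alpha> = (\<Sum>\<sigma>\<in>S. co \<sigma> (h + \<alpha>) * (\<sigma> \<bullet> \<alpha>))" by (rule inner_expand)
    also have "\<dots> \<le> 0" using nnint_co_ge[OF p] leS by (intro sum_nonpos) (simp add: mult_nonneg_nonpos)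
    finally have e2: "(h + \<alpha>) \<bullet> \<alpha> \<le> 0" .
    show False using e1 e2 pos leh by linarith
  qed
qed

lemma cp_pos: assumes "\<alpha> \<in> \<Phi>" "\<beta> \<in> \<Phi>" "\<alpha> \<bullet> \<beta> > 0" shows "cp \<alpha> \<beta> \<ge> 1"
proof -
  have "real_of_int (cp \<alpha> \<beta>) > 0" using cp_eq[OF assms(1,2)] assms(3) root_sq_pos[OF assms(2)] by simp
  then show ?thesis by simp
qed

definition NV :: "'a \<times> int \<Rightarrow> nat" where "NV a = nat \<lfloor>(H + 1) * ev a c0\<rfloor>"

lemma NV_int: assumes "a \<in> AR" shows "(H + 1) * ev a c0 \<in> \<int>"
proof -
  have Hp: "H + 1 \<noteq> 0" using H_ge1 by simp
  have "(H + 1) * ev a c0 = (H + 1) * (ht (fst a) / (H + 1)) - of_int (snd a) * (H + 1)"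
    by (simp add: ev_def c0_inner algebra_simps)
  also have "(H + 1) * (ht (fst a) / (H + 1)) = ht (fst a)" using Hp by simp
  finally have "(H + 1) * ev a c0 = ht (fst a) - of_int (snd a) * (H + 1)" .
  moreover have "ht (fst a) \<in> \<int>" using ht_int assms by (simp add: AR_iff)
  ultimately show ?thesis using H_int by simp
qed

lemma NV_less: assumes "a \<in> AR" "a' \<in> AR" "0 < ev a' c0" "ev a' c0 < ev a c0" shows "NV a' < NV a"
proof -
  have Hp: "H + 1 > 0" using H_ge1 by simp
  obtain n where n: "(H + 1) * ev a c0 = of_int n" using NV_int[OF assms(1)] by (auto elim: Ints_cases)
  obtain n' where n': "(H + 1) * ev a' c0 = of_int n'" using NV_int[OF assms(2)] by (auto elim: Ints_cases)
  have "of_int n' < (of_int n :: real)" using n n' assms(4) Hp by (metis mult_strict_left_mono)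
  moreover have "of_int n' > (0::real)" using n' assms(3) Hp by (metis mult_pos_pos)
  ultimately show ?thesis unfolding NV_def n n' by simp
qed

lemma gen_pos: "a \<in> AR \<Longrightarrow> ev a c0 > 0 \<Longrightarrow> \<exists>ws b. set ws \<subseteq> SA \<and> b \<in> SA \<and> a = cj ws b"
proof (induction "NV a" arbitrary: a rule: less_induct)
  case less
  show ?case
  proof (cases "a \<in> SA")
    case True
    then show ?thesis by (intro exI[of _ "[]"] exI[of _ a]) simp
  next
    case False
    obtain b where b: "b \<in> SA" "fst a \<bullet> fst b > 0" using exists_b[of "fst a"] less.prems by (auto simp: AR_iff)
    have bA: "b \<in> AR" using b SA_AR by auto
    have ne: "a \<noteq> b" using False b by auto
    define a' where "a' = rr b a"
    have a'A: "a' \<in> AR" unfolding a'_def using rr_AR[OF less.prems(1) bA] .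
    have pos': "ev a' c0 > 0" unfolding a'_def using rr_pos[OF b(1) less.prems ne] .
    have cp1: "cp (fst a) (fst b) \<ge> 1" using cp_pos b less.prems bA by (auto simp: AR_iff)
    have "ev a' c0 = ev a c0 - of_int (cp (fst a) (fst b)) * ev b c0"
      unfolding a'_def by (rule ev_rr_lin[OF less.prems(1) bA])
    moreover have "of_int (cp (fst a) (fst b)) * ev b c0 > 0" using cp1 SA_c0[OF b(1)] by simp
    ultimately have lt: "ev a' c0 < ev a c0" by simp
    have "NV a' < NV a" using NV_less[OF less.prems(1) a'A pos' lt] .
    then obtain ws b' where ih: "set ws \<subseteq> SA" "b' \<in> SA" "a' = cj ws b'" using less.hyps a'A pos' by blast
    have "a = rr b a'" unfolding a'_def using rr_invol[OF less.prems(1) bA] by simp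
    then have "a = cj (b # ws) b'" using ih by simp
    then show ?thesis using ih b by (intro exI[of _ "b # ws"] exI[of _ b']) auto
  qed
qed

lemma gen_refl: assumes "a \<in> AR" shows "\<exists>ws. set ws \<subseteq> SA \<and> sr a = wd ws"
proof -
  have "\<exists>a'. a' \<in> AR \<and> ev a' c0 > 0 \<and> sr a' = sr a"
  proof (cases "ev a c0 > 0")
    case True then show ?thesis using assms by blast
  next
    case False
    then have "ev (ng a) c0 > 0" using evA_nz[OF assms c0_in] by (simp add: ev_ng)
    then show ?thesis using ng_AR[OF assms] sr_ng by blast
  qed
  then obtain a' where a': "a' \<in> AR" "ev a' c0 > 0" "sr a' = sr a" by blast
  obtain ws b where wb: "set ws \<subseteq> SA" "b \<in> SA" "a' = cj ws b" using gen_pos[OF a'(1,2)] by blast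
  have wsA: "set ws \<subseteq> AR" using wb SA_AR by auto
  have bA: "b \<in> AR" using wb SA_AR by auto
  have "sr a x = wd (ws @ [b] @ rev ws) x" for x
    using conj_wd[OF wsA bA, of x] a' wb by (simp add: wd_append)
  then have "sr a = wd (ws @ [b] @ rev ws)" by auto
  then show ?thesis using wb by (intro exI[of _ "ws @ [b] @ rev ws"]) auto
qed

lemma gen_words: "set ws \<subseteq> AR \<Longrightarrow> \<exists>bs. set bs \<subseteq> SA \<and> wd ws = wd bs"
proof (induction ws)
  case Nil
  then show ?case by (intro exI[of _ "[]"]) simp
next
  case (Cons a ws)
  then obtain bs where bs: "set bs \<subseteq> SA" "wd ws = wd bs" by auto
  have "a \<in> AR" using Cons.prems by simp
  then obtain cs where cs: "set cs \<subseteq> SA" "sr a = wd cs" using gen_refl by blast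
  have "wd (a # ws) = wd (cs @ bs)" using bs cs by (auto simp: wd_append)
  then show ?case using bs cs by (intro exI[of _ "cs @ bs"]) auto
qed

definition NN :: "('a \<Rightarrow> 'a) \<Rightarrow> ('a \<times> int) set" where
  "NN w = {a \<in> AR. ev a c0 > 0 \<and> ev a (w c0) < 0}"

lemma wd_nz: "set p \<subseteq> AR \<Longrightarrow> a \<in> AR \<Longrightarrow> ev a (wd p c0) \<noteq> 0"
  using ev_wd evA_nz[OF pull_AR c0_in] by metis

lemma ev_snoc: assumes "set p \<subseteq> AR" "b \<in> AR" "a \<in> AR"
  shows "ev a (wd (p @ [b]) c0) = ev (rr b (pull p a)) c0"
  using ev_wd[OF assms(1,3)] ev_sr[OF pull_AR[OF assms(1,3)] assms(2)] by (simp add: wd_append)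

lemma toggle: assumes p: "set p \<subseteq> SA" and b: "b \<in> SA" and a: "a \<in> AR" and nb: "pull p a \<noteq> b" "pull p a \<noteq> ng b"
  shows "ev a (wd (p @ [b]) c0) > 0 \<longleftrightarrow> ev a (wd p c0) > 0"
proof -
  have pA: "set p \<subseteq> AR" using p SA_AR by auto
  have bA: "b \<in> AR" using b SA_AR by auto
  define a2 where "a2 = pull p a"
  have a2A: "a2 \<in> AR" unfolding a2_def using pull_AR[OF pA a] .
  have e1: "ev a (wd (p @ [b]) c0) = ev (rr b a2) c0" unfolding a2_def by (rule ev_snoc[OF pA bA a])
  have e2: "ev a (wd p c0) = ev a2 c0" unfolding a2_def by (rule ev_wd[OF pA a])
  show ?thesis
  proof (cases "ev a2 c0 > 0")
    case True
    then show ?thesis using rr_pos[OF b a2A True] nb e1 e2 unfolding a2_def by simp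
  next
    case False
    then have "ev (ng a2) c0 > 0" using evA_nz[OF a2A c0_in] by (simp add: ev_ng)
    moreover have "ng a2 \<noteq> b" using nb ng_ng unfolding a2_def by metis
    ultimately have "ev (rr b (ng a2)) c0 > 0" using rr_pos[OF b ng_AR[OF a2A]] by simp
    then have "ev (rr b a2) c0 < 0" using rr_ng[OF a2A bA] by (simp add: ev_ng)
    then show ?thesis using e1 e2 False by simp
  qed
qed

lemma toggle2: assumes p: "set p \<subseteq> SA" and b: "b \<in> SA" and a: "a \<in> AR" and nb: "pull p a = b \<or> pull p a = ng b"
  shows "ev a (wd (p @ [b]) c0) > 0 \<longleftrightarrow> \<not> ev a (wd p c0) > 0"
proof -
  have pA: "set p \<subseteq> AR" using p SA_AR by auto
  have bA: "b \<in> AR" using b SA_AR by auto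
  define a2 where "a2 = pull p a"
  have e1: "ev a (wd (p @ [b]) c0) = ev (rr b a2) c0" unfolding a2_def by (rule ev_snoc[OF pA bA a])
  have e2: "ev a (wd p c0) = ev a2 c0" unfolding a2_def by (rule ev_wd[OF pA a])
  have nb2: "a2 = b \<or> a2 = ng b" using nb unfolding a2_def .
  have "ev (rr b a2) c0 = - ev a2 c0"
    using nb2
  proof
    assume "a2 = b" then show ?thesis using rr_self[OF bA] by (simp add: ev_ng)
  next
    assume "a2 = ng b" then show ?thesis using rr_ng[OF bA bA] rr_self[OF bA] ng_ng by (simp add: ev_ng)
  qed
  moreover have "ev a2 c0 \<noteq> 0" unfolding a2_def using evA_nz[OF pull_AR[OF pA a] c0_in] .
  ultimately show ?thesis using e1 e2 by auto
qed

lemma NN_sub: assumes p: "set p \<subseteq> SA" and b: "b \<in> SA"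
  shows "NN (wd (p @ [b])) \<subseteq> NN (wd p) \<union> {cj p b, ng (cj p b)}"
proof
  fix a assume aN: "a \<in> NN (wd (p @ [b]))"
  then have a: "a \<in> AR" "ev a c0 > 0" "ev a (wd (p @ [b]) c0) < 0" unfolding NN_def by auto
  have pA: "set p \<subseteq> AR" using p SA_AR by auto
  have bA: "b \<in> AR" using b SA_AR by auto
  show "a \<in> NN (wd p) \<union> {cj p b, ng (cj p b)}"
  proof (cases "pull p a = b \<or> pull p a = ng b")
    case True
    then show ?thesis
    proof
      assume "pull p a = b" then have "a = cj p b" using cj_pull[OF pA a(1)] by simp
      then show ?thesis by simp
    next
      assume e: "pull p a = ng b"
      have "pull p (ng (cj p b)) = ng b" using pull_ng[OF pA cj_AR[OF pA bA]] pull_cj[OF pA bA] by simp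
      then have "cj p (pull p a) = cj p (pull p (ng (cj p b)))" using e by simp
      then have "a = ng (cj p b)" using cj_pull[OF pA a(1)] cj_pull[OF pA ng_AR[OF cj_AR[OF pA bA]]] by simp
      then show ?thesis by simp
    qed
  next
    case False
    then have "\<not> ev a (wd p c0) > 0" using toggle[OF p b a(1)] a(3) by auto
    then have "ev a (wd p c0) < 0" using wd_nz[OF pA a(1)] by linarith
    then show ?thesis using a unfolding NN_def by auto
  qed
qed

lemma NN_all: "set p \<subseteq> SA \<Longrightarrow>
  NN (wd p) \<subseteq> {a. \<exists>i<length p. a = cj (take i p) (p ! i) \<or> a = ng (cj (take i p) (p ! i))}"
proof (induction p rule: rev_induct)
  case Nil
  then show ?case unfolding NN_def by auto
next
  case (snoc b p)
  have p: "set p \<subseteq> SA" and b: "b \<in> SA" using snoc.prems by auto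
  show ?case
  proof
    fix a assume "a \<in> NN (wd (p @ [b]))"
    then have "a \<in> NN (wd p) \<or> a = cj p b \<or> a = ng (cj p b)" using NN_sub[OF p b] by auto
    then show "a \<in> {a. \<exists>i<length (p @ [b]). a = cj (take i (p @ [b])) ((p @ [b]) ! i) \<or>
        a = ng (cj (take i (p @ [b])) ((p @ [b]) ! i))}"
    proof (elim disjE)
      assume "a \<in> NN (wd p)"
      then obtain i where "i < length p" "a = cj (take i p) (p ! i) \<or> a = ng (cj (take i p) (p ! i))"
        using snoc.IH[OF p] by auto
      then show ?thesis by (intro CollectI exI[of _ i]) (auto simp: nth_append)
    next
      assume "a = cj p b" then show ?thesis by (intro CollectI exI[of _ "length p"]) auto
    next
      assume "a = ng (cj p b)" then show ?thesis by (intro CollectI exI[of _ "length p"]) auto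
    qed
  qed
qed

lemma wd_snoc_conj: assumes "set p \<subseteq> AR" "b \<in> AR" shows "wd (p @ [b]) x = sr (cj p b) (wd p x)"
proof -
  have "wd (p @ [b]) x = wd p (sr b (wd (rev p) (wd p x)))" using wd_rev1[OF assms(1)] by (simp add: wd_append)
  also have "\<dots> = sr (cj p b) (wd p x)" by (rule conj_wd[OF assms])
  finally show ?thesis .
qed

lemma delete: assumes p: "set p \<subseteq> SA" and b: "b \<in> SA" and N: "NN (wd (p @ [b])) = {}"
  shows "\<exists>q. set q \<subseteq> SA \<and> length q < length (p @ [b]) \<and> wd q = wd (p @ [b])"
proof -
  have pA: "set p \<subseteq> AR" using p SA_AR by auto
  have bA: "b \<in> AR" using b SA_AR by auto
  define X where "X = cj p b"
  have XA: "X \<in> AR" unfolding X_def using cj_AR[OF pA bA] .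
  define a where "a = (if ev X c0 > 0 then X else ng X)"
  have aA: "a \<in> AR" unfolding a_def using XA ng_AR by auto
  have apos: "ev a c0 > 0" unfolding a_def using evA_nz[OF XA c0_in] by (auto simp: ev_ng)
  have pl: "pull p a = b \<or> pull p a = ng b" unfolding a_def X_def
    using pull_cj[OF pA bA] pull_ng[OF pA cj_AR[OF pA bA]] by auto
  have srA: "sr a = sr X" unfolding a_def using sr_ng[of X] by auto
  have "a \<notin> NN (wd (p @ [b]))" using N by simp
  then have "ev a (wd (p @ [b]) c0) \<ge> 0" using aA apos unfolding NN_def by auto
  moreover have "ev a (wd (p @ [b]) c0) \<noteq> 0" using wd_nz[of "p @ [b]" a] pA bA aA by auto
  ultimately have "ev a (wd (p @ [b]) c0) > 0" by simp
  then have "\<not> ev a (wd p c0) > 0" using toggle2[OF p b aA pl] by simp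
  then have "ev a (wd p c0) < 0" using wd_nz[OF pA aA] by linarith
  then have "a \<in> NN (wd p)" using aA apos unfolding NN_def by auto
  then obtain i where i: "i < length p" "a = cj (take i p) (p ! i) \<or> a = ng (cj (take i p) (p ! i))"
    using NN_all[OF p] by blast
  define p1 where "p1 = take i p"
  define c where "c = p ! i"
  define p2 where "p2 = drop (Suc i) p"
  have pe: "p = p1 @ [c] @ p2" unfolding p1_def c_def p2_def using id_take_nth_drop[OF i(1)] by simp
  have p1A: "set p1 \<subseteq> AR" using pA pe by auto
  have cA: "c \<in> AR" using pA pe by auto
  have p12: "set (p1 @ p2) \<subseteq> SA" using p pe by auto
  define Y where "Y = cj p1 c"
  have YA: "Y \<in> AR" unfolding Y_def using cj_AR[OF p1A cA] .
  have "sr a = sr Y" using i(2) sr_ng[of Y] unfolding Y_def p1_def c_def by auto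
  then have XY: "sr X = sr Y" using srA by simp
  have "wd (p @ [b]) x = wd (p1 @ p2) x" for x
  proof -
    have "wd (p @ [b]) x = sr X (wd p x)" unfolding X_def by (rule wd_snoc_conj[OF pA bA])
    also have "wd p x = wd (p1 @ [c]) (wd p2 x)" unfolding pe by (simp add: wd_append)
    also have "\<dots> = sr Y (wd p1 (wd p2 x))" unfolding Y_def by (rule wd_snoc_conj[OF p1A cA])
    also have "sr X (sr Y (wd p1 (wd p2 x))) = wd p1 (wd p2 x)" using XY sr_invol[OF YA] by simp
    finally show ?thesis by (simp add: wd_append)
  qed
  then have "wd (p1 @ p2) = wd (p @ [b])" by auto
  moreover have "length (p1 @ p2) < length (p @ [b])" using pe by simp
  ultimately show ?thesis using p12 by blast
qed

lemma NN_empty: assumes "w c0 \<in> A" shows "NN w = {}"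
  using evA_sign[OF _ c0_in assms] unfolding NN_def by auto

lemma free_words: "set bs \<subseteq> SA \<Longrightarrow> wd bs c0 \<in> A \<Longrightarrow> wd bs = id"
proof (induction "length bs" arbitrary: bs rule: less_induct)
  case less
  show ?case
  proof (cases bs rule: rev_exhaust)
    case Nil
    then show ?thesis by simp
  next
    case (snoc p b)
    have p: "set p \<subseteq> SA" and b: "b \<in> SA" using less.prems snoc by auto
    have "NN (wd (p @ [b])) = {}" using NN_empty less.prems snoc by auto
    then obtain q where q: "set q \<subseteq> SA" "length q < length (p @ [b])" "wd q = wd (p @ [b])"
      using delete[OF p b] by blast
    have "wd q = id" using less.hyps[of q] q less.prems snoc by auto
    then show ?thesis using q snoc by simp
  qed
qed

lemma free: assumes "set ws \<subseteq> AR" "wd ws c0 \<in> A" shows "wd ws = id"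
proof -
  obtain bs where "set bs \<subseteq> SA" "wd ws = wd bs" using gen_words[OF assms(1)] by auto
  then show ?thesis using free_words assms(2) by auto
qed

end
context afw begin

lemma strip: assumes "set ws \<subseteq> AR" "\<alpha> \<in> \<Phi>"
  shows "\<exists>r::int. \<forall>y\<in>wd ws ` A. of_int r - 1 < \<alpha> \<bullet> y \<and> \<alpha> \<bullet> y < of_int r"
proof -
  have a0: "(\<alpha>, 0) \<in> AR" using assms(2) by (simp add: AR_iff)
  obtain \<beta> n where bn: "pull ws (\<alpha>, 0) = (\<beta>, n)" by (cases "pull ws (\<alpha>, 0)")
  have bA: "\<beta> \<in> \<Phi>" using pull_AR[OF assms(1) a0] bn by (simp add: AR_iff)
  have e: "\<alpha> \<bullet> wd ws x = \<beta> \<bullet> x - of_int n" for x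
    using ev_wd[OF assms(1) a0, of x] bn by (simp add: ev_def)
  show ?thesis
  proof (cases "ispos \<beta>")
    case True
    show ?thesis
    proof (intro exI[of _ "1 - n"] ballI)
      fix y assume "y \<in> wd ws ` A"
      then obtain x where x: "x \<in> A" "y = wd ws x" by auto
      show "of_int (1 - n) - 1 < \<alpha> \<bullet> y \<and> \<alpha> \<bullet> y < of_int (1 - n)"
        using inA[OF x(1) bA True] e[of x] x(2) by simp
    qed
  next
    case False
    show ?thesis
    proof (intro exI[of _ "- n"] ballI)
      fix y assume "y \<in> wd ws ` A"
      then obtain x where x: "x \<in> A" "y = wd ws x" by auto
      show "of_int (- n) - 1 < \<alpha> \<bullet> y \<and> \<alpha> \<bullet> y < of_int (- n)"
        using inA_neg[OF x(1) bA False] e[of x] x(2) by simp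
    qed
  qed
qed

lemma int_unique: assumes "of_int r - 1 < (v::real)" "v < of_int r" "of_int r' - 1 < v" "v < of_int r'"
  shows "r = r'"
proof -
  have "of_int r < (of_int r' + 1 :: real)" "of_int r' < (of_int r + 1 :: real)" using assms by linarith+
  then have "r < r' + 1" "r' < r + 1" by linarith+
  then show ?thesis by simp
qed

lemma r_of_prop: assumes "set ws \<subseteq> AR" "\<alpha> \<in> \<Phi>"
  shows "\<forall>y\<in>wd ws ` A. of_int (r_of A (wd ws) \<alpha>) - 1 < \<alpha> \<bullet> y \<and> \<alpha> \<bullet> y < of_int (r_of A (wd ws) \<alpha>)"
proof -
  obtain r where r: "\<forall>y\<in>wd ws ` A. of_int r - 1 < \<alpha> \<bullet> y \<and> \<alpha> \<bullet> y < of_int r"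
    using strip[OF assms] by blast
  have "r_of A (wd ws) \<alpha> = r"
    unfolding r_of_def
  proof (rule the_equality)
    show "\<forall>y\<in>wd ws ` A. of_int r - 1 < \<alpha> \<bullet> y \<and> \<alpha> \<bullet> y < of_int r" by (rule r)
    fix r' assume r': "\<forall>y\<in>wd ws ` A. of_int r' - 1 < \<alpha> \<bullet> y \<and> \<alpha> \<bullet> y < of_int r'"
    have "wd ws c0 \<in> wd ws ` A" using c0_in by simp
    then show "r' = r" using r r' int_unique by meson
  qed
  then show ?thesis using r by simp
qed

end

lemma sum_list_replicate_scaleR: "sum_list (replicate n (v::'a::real_vector)) = real n *\<^sub>R v"
  by (induction n) (auto simp: algebra_simps)

lemma sum_list_fst_concat: "sum_list (map fst (concat L)) = sum_list (map (\<lambda>l. sum_list (map fst l)) L)"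
  by (induction L) auto

locale reg = afw +
  fixes m :: nat and R :: "'a set"
  assumes m1: "m \<ge> 1" and isreg: "is_region \<Phi> m R" and domR: "dominant \<Phi> S R" and bddR: "bounded R"
begin

definition U :: "'a set" where "U = - \<Union>(shi_hyperplanes \<Phi> m)"
definition J :: "nat \<Rightarrow> 'a set" where "J = phi_chain \<Phi> S R"
definition ra :: "'a \<Rightarrow> nat" where "ra \<alpha> = r_alpha J m \<alpha>"

lemma U_iff: "y \<in> U \<longleftrightarrow> (\<forall>\<alpha>\<in>\<Phi>. \<forall>k::nat. k \<le> m \<longrightarrow> \<alpha> \<bullet> y \<noteq> real k)"
  unfolding U_def shi_hyperplanes_def by auto

definition x0 :: 'a where "x0 = (SOME x. x \<notin> \<Union>(shi_hyperplanes \<Phi> m) \<and>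
          R = connected_component_set (- \<Union>(shi_hyperplanes \<Phi> m)) x)"

lemma x0_prop: "x0 \<in> U" "R = connected_component_set U x0"
proof -
  have "\<exists>x. x \<notin> \<Union>(shi_hyperplanes \<Phi> m) \<and> R = connected_component_set (- \<Union>(shi_hyperplanes \<Phi> m)) x"
    using isreg unfolding is_region_def .
  from someI_ex[OF this] show "x0 \<in> U" "R = connected_component_set U x0"
    unfolding x0_def U_def by auto
qed

lemma R_sub: "R \<subseteq> U" using x0_prop connected_component_subset by metis
lemma x0_R: "x0 \<in> R" by (subst x0_prop(2)) (simp add: x0_prop(1))
lemma R_conn: "connected R" by (subst x0_prop(2)) (rule connected_connected_component)

lemma R_U: "y \<in> R \<Longrightarrow> \<alpha> \<in> \<Phi> \<Longrightarrow> k \<le> m \<Longrightarrow> \<alpha> \<bullet> y \<noteq> real k"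
  using R_sub U_iff by blast

lemma R_dom: "y \<in> R \<Longrightarrow> \<alpha> \<in> \<Phi> \<Longrightarrow> ispos \<alpha> \<Longrightarrow> \<alpha> \<bullet> y > 0"
  using domR unfolding dominant_def pos_roots_def by auto

lemma side: assumes "y \<in> R" "z \<in> R" "\<alpha> \<in> \<Phi>" "k \<le> m"
  shows "\<alpha> \<bullet> y < real k \<longleftrightarrow> \<alpha> \<bullet> z < real k"
proof -
  have "False" if uv: "u \<in> R" "v \<in> R" "\<alpha> \<bullet> u < real k" "\<not> \<alpha> \<bullet> v < real k" for u v
  proof -
    obtain w where "w \<in> R" "\<alpha> \<bullet> w = real k"
      using connected_ivt_hyperplane[OF R_conn uv(1,2), of \<alpha> "real k"] uv by auto
    then show False using R_U assms by blast
  qed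
  then show ?thesis using assms by blast
qed

lemma simple_lt_m: assumes "\<sigma> \<in> S" "y \<in> R" shows "\<sigma> \<bullet> y < real m"
proof (rule ccontr)
  assume "\<not> ?thesis"
  then have "\<not> \<sigma> \<bullet> x0 < real m" using side[OF assms(2) x0_R, of \<sigma> m] SsubPhi assms(1) by auto
  moreover have "\<sigma> \<bullet> x0 \<noteq> real m" using R_U[OF x0_R, of \<sigma> m] SsubPhi assms(1) by auto
  ultimately have sx: "\<sigma> \<bullet> x0 > real m" by simp
  define \<omega> where "\<omega> = om \<sigma>"
  have co\<omega>: "\<omega> \<bullet> v = co \<sigma> v" for v unfolding \<omega>_def co_def ..
  define T where "T = (\<lambda>t. x0 + t *\<^sub>R \<omega>) ` {0..}"
  have Tc: "connected T" unfolding T_def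
    by (intro connected_continuous_image continuous_intros) simp
  have x0T: "x0 \<in> T" unfolding T_def by (auto intro: image_eqI[of _ _ 0])
  have x0pos: "\<forall>\<tau>\<in>S. \<tau> \<bullet> x0 > 0" using R_dom[OF x0_R] SsubPhi simple_pos by auto
  have TU: "T \<subseteq> U"
  proof
    fix y assume "y \<in> T"
    then obtain t where t: "t \<ge> 0" "y = x0 + t *\<^sub>R \<omega>" unfolding T_def by auto
    have iy: "\<alpha> \<bullet> y = \<alpha> \<bullet> x0 + t * co \<sigma> \<alpha>" for \<alpha>
      unfolding t(2) by (simp add: inner_add_right co\<omega>[symmetric] inner_commute)
    have "\<alpha> \<bullet> y \<noteq> real k" if a: "\<alpha> \<in> \<Phi>" "k \<le> m" for \<alpha> k
    proof (cases "ispos \<alpha>")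
      case True
      have cge: "co \<sigma> \<alpha> \<ge> 0" using nnint_co_ge[OF True assms(1)] .
      show ?thesis
      proof (cases "co \<sigma> \<alpha> = 0")
        case True
        then show ?thesis using iy R_U[OF x0_R a] by simp
      next
        case False
        have "co \<sigma> \<alpha> \<in> \<nat>" using nnint_co[OF True assms(1)] .
        then have c1: "co \<sigma> \<alpha> \<ge> 1" using False by (cases rule: Nats_cases) auto
        have "co \<sigma> \<alpha> * (\<sigma> \<bullet> x0) \<le> (\<Sum>\<tau>\<in>S. co \<tau> \<alpha> * (\<tau> \<bullet> x0))"
          using finS assms(1) nnint_co_ge[OF True] x0pos
          by (intro member_le_sum) (auto intro: mult_nonneg_nonneg less_imp_le)
        then have "co \<sigma> \<alpha> * (\<sigma> \<bullet> x0) \<le> \<alpha> \<bullet> x0" using inner_expand[of \<alpha> x0] by simp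
        moreover have "\<sigma> \<bullet> x0 \<le> co \<sigma> \<alpha> * (\<sigma> \<bullet> x0)" using c1 sx
          by (metis mult_le_cancel_right1 of_nat_0_le_iff order_le_less_trans less_imp_le not_le)
        ultimately have "\<alpha> \<bullet> x0 > real m" using sx by linarith
        moreover have "t * co \<sigma> \<alpha> \<ge> 0" using t cge by simp
        ultimately show ?thesis using iy a(2) by (smt (verit) of_nat_le_iff)
      qed
    next
      case False
      have g: "ispos (- \<alpha>)" "- \<alpha> \<in> \<Phi>" using pos_or_neg[OF a(1) False] by auto
      have "(- \<alpha>) \<bullet> x0 > 0" using R_dom[OF x0_R g(2,1)] .
      moreover have "t * co \<sigma> (- \<alpha>) \<ge> 0" using t nnint_co_ge[OF g(1) assms(1)] by simp
      ultimately have "(- \<alpha>) \<bullet> y > 0" using iy[of "- \<alpha>"] by simp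
      then show ?thesis by simp
    qed
    then show "y \<in> U" unfolding U_iff by auto
  qed
  have TR: "T \<subseteq> R" using connected_component_maximal[OF x0T Tc TU] x0_prop by simp
  obtain B where B: "\<forall>x\<in>R. norm x \<le> B" using bddR unfolding bounded_iff by auto
  have \<omega>n: "\<omega> \<noteq> 0" using om[OF assms(1)] unfolding \<omega>_def by auto
  define t where "t = (B + norm x0 + 1) / norm \<omega>"
  have t0: "t \<ge> 0" unfolding t_def using B x0_R norm_ge_zero[of x0] \<omega>n
    by (smt (verit) divide_nonneg_pos norm_ge_zero zero_less_norm_iff)
  have "x0 + t *\<^sub>R \<omega> \<in> R" using TR t0 unfolding T_def by auto
  then have le: "norm (x0 + t *\<^sub>R \<omega>) \<le> B" using B by auto
  have "norm x0 \<le> B" using B x0_R by blast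
  then have B0: "B \<ge> 0" using norm_ge_zero[of x0] by linarith
  have Bp: "B + norm x0 + 1 > 0" using B0 norm_ge_zero[of x0] by linarith
  have "norm (t *\<^sub>R \<omega>) = B + norm x0 + 1" unfolding t_def using \<omega>n Bp by simp
  moreover have "norm (t *\<^sub>R \<omega>) \<le> norm (x0 + t *\<^sub>R \<omega>) + norm x0"
    using norm_triangle_ineq4[of "x0 + t *\<^sub>R \<omega>" x0] by simp
  ultimately show False using le by simp
qed

lemma simple_J: "\<sigma> \<in> S \<Longrightarrow> \<sigma> \<in> J m"
  unfolding J_def phi_chain_def pos_roots_def using SsubPhi simple_pos simple_lt_m by auto

lemma decomp_exists: assumes "\<alpha> \<in> \<Phi>" "ispos \<alpha>"
  shows "\<exists>n ps. ps \<noteq> [] \<and> (\<forall>(\<beta>, i)\<in>set ps. i \<le> m \<and> \<beta> \<in> J i) \<and>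
       sum_list (map fst ps) = \<alpha> \<and> sum_list (map snd ps) = n"
proof -
  obtain xs where xs: "set xs = S" "distinct xs" using finite_distinct_list[OF finS] by auto
  define ps where "ps = concat (map (\<lambda>\<sigma>. replicate (nat \<lfloor>co \<sigma> \<alpha>\<rfloor>) (\<sigma>, m)) xs)"
  have cn: "real (nat \<lfloor>co \<sigma> \<alpha>\<rfloor>) = co \<sigma> \<alpha>" if "\<sigma> \<in> S" for \<sigma>
    using nnint_co[OF assms(2) that] by (cases rule: Nats_cases) auto
  have "sum_list (map fst ps) = sum_list (map (\<lambda>\<sigma>. real (nat \<lfloor>co \<sigma> \<alpha>\<rfloor>) *\<^sub>R \<sigma>) xs)"
    unfolding ps_def sum_list_fst_concat by (simp add: comp_def sum_list_replicate_scaleR)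
  also have "\<dots> = (\<Sum>\<sigma>\<in>S. real (nat \<lfloor>co \<sigma> \<alpha>\<rfloor>) *\<^sub>R \<sigma>)"
    using sum_list_distinct_conv_sum_set[OF xs(2), of "\<lambda>\<sigma>. real (nat \<lfloor>co \<sigma> \<alpha>\<rfloor>) *\<^sub>R \<sigma>"] xs(1) by simp
  also have "\<dots> = (\<Sum>\<sigma>\<in>S. co \<sigma> \<alpha> *\<^sub>R \<sigma>)" using cn by (intro sum.cong) auto
  also have "\<dots> = \<alpha>" by (rule expand[symmetric])
  finally have s: "sum_list (map fst ps) = \<alpha>" .
  have ne: "ps \<noteq> []" using s root_nz[OF assms(1)] by auto
  have el: "\<forall>(\<beta>, i)\<in>set ps. i \<le> m \<and> \<beta> \<in> J i" unfolding ps_def using xs(1) simple_J by auto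
  show ?thesis using ne el s by blast
qed

lemma decomp_bound: "(\<forall>(\<beta>, i)\<in>set ps. i \<le> m \<and> \<beta> \<in> J i) \<Longrightarrow> y \<in> R \<Longrightarrow>
  sum_list (map fst ps) \<bullet> y \<le> real (sum_list (map snd ps)) \<and>
  (ps \<noteq> [] \<longrightarrow> sum_list (map fst ps) \<bullet> y < real (sum_list (map snd ps)))"
proof (induction ps)
  case Nil
  then show ?case by simp
next
  case (Cons p ps)
  obtain \<beta> i where p: "p = (\<beta>, i)" by (cases p)
  have "\<beta> \<in> J i" using Cons.prems p by auto
  then have lt: "\<beta> \<bullet> y < real i" using Cons.prems(2) unfolding J_def phi_chain_def by auto
  have "sum_list (map fst ps) \<bullet> y \<le> real (sum_list (map snd ps))" using Cons by auto
  then show ?case using lt p by (simp add: inner_add_left)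
qed

lemma ra_bound: assumes "\<alpha> \<in> \<Phi>" "ispos \<alpha>" "y \<in> R" shows "\<alpha> \<bullet> y < real (ra \<alpha>)"
proof -
  let ?P = "\<lambda>n. \<exists>ps :: ('a \<times> nat) list. ps \<noteq> [] \<and> (\<forall>(\<beta>, i)\<in>set ps. i \<le> m \<and> \<beta> \<in> J i) \<and>
       sum_list (map fst ps) = \<alpha> \<and> sum_list (map snd ps) = n"
  have ex: "\<exists>n. ?P n" using decomp_exists[OF assms(1,2)] by blast
  have "?P (ra \<alpha>)" unfolding ra_def r_alpha_def using LeastI_ex[OF ex] .
  then obtain ps where ps: "ps \<noteq> []" "\<forall>(\<beta>, i)\<in>set ps. i \<le> m \<and> \<beta> \<in> J i"
    "sum_list (map fst ps) = \<alpha>" "sum_list (map snd ps) = ra \<alpha>" by blast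
  show ?thesis using decomp_bound[OF ps(2) assms(3)] ps by auto
qed

lemma ra_le: assumes "\<alpha> \<in> J k" "k \<le> m" shows "ra \<alpha> \<le> k"
  unfolding ra_def r_alpha_def
  by (rule Least_le) (rule exI[of _ "[(\<alpha>, k)]"], use assms in auto)

end

lemma seg_side: assumes "0 \<le> u" "u \<le> 1" "(a < k \<and> b < k) \<or> (a > k \<and> b > (k::real))"
  shows "(1 - u) * a + u * b \<noteq> k"
proof -
  have "(1 - u) * a + u * b < k" if "a < k" "b < k" using convex_bound_lt[OF that, of "1 - u" u] assms by simp
  moreover have "(1 - u) * (- a) + u * (- b) < - k" if "a > k" "b > k"
    using convex_bound_lt[of "- a" "- k" "- b" "1 - u" u] that assms by simp
  ultimately show ?thesis using assms(3) by (auto simp: algebra_simps)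
qed

context reg begin

lemma posr: "\<alpha> \<in> \<Phi> \<Longrightarrow> ispos \<alpha> \<Longrightarrow> \<alpha> \<in> pos_roots \<Phi> S" unfolding pos_roots_def by auto
lemma posr_D: "\<alpha> \<in> pos_roots \<Phi> S \<Longrightarrow> \<alpha> \<in> \<Phi> \<and> ispos \<alpha>" unfolding pos_roots_def by auto

theorem main:
  assumes wR: "wR \<in> affine_weyl \<Phi>" and hyp: "\<forall>\<alpha>\<in>pos_roots \<Phi> S. r_of A wR \<alpha> = int (ra \<alpha>)"
  shows "(wR ` A \<subseteq> R \<and>
          (\<forall>\<alpha>\<in>pos_roots \<Phi> S. \<forall>r::int. (\<exists>x\<in>R. \<alpha> \<bullet> x > real_of_int r) \<longrightarrow>
              (\<forall>x\<in>wR ` A. \<alpha> \<bullet> x > real_of_int r)))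
       \<and> (\<forall>w\<in>affine_weyl \<Phi>.
            (w ` A \<subseteq> R \<and>
             (\<forall>\<alpha>\<in>pos_roots \<Phi> S. \<forall>r::int. (\<exists>x\<in>R. \<alpha> \<bullet> x > real_of_int r) \<longrightarrow>
                 (\<forall>x\<in>w ` A. \<alpha> \<bullet> x > real_of_int r)))
            \<longrightarrow> w = wR)"
proof -
  obtain ws where ws: "set ws \<subseteq> AR" "wR = wd ws" using weyl_words[OF wR] by auto
  have M1: "real (ra \<alpha>) - 1 < \<alpha> \<bullet> y \<and> \<alpha> \<bullet> y < real (ra \<alpha>)"
    if "\<alpha> \<in> \<Phi>" "ispos \<alpha>" "y \<in> wR ` A" for \<alpha> y
    using r_of_prop[OF ws(1) that(1)] hyp posr[OF that(1,2)] that(3) ws(2) by auto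
  have M2: "\<alpha> \<bullet> y > of_int r"
    if "\<alpha> \<in> \<Phi>" "ispos \<alpha>" "x \<in> R" "\<alpha> \<bullet> x > of_int r" "y \<in> wR ` A" for \<alpha> x r y
  proof -
    have "\<alpha> \<bullet> x < real (ra \<alpha>)" using ra_bound[OF that(1-3)] .
    then have "of_int r < real (ra \<alpha>)" using that(4) by linarith
    then have "r < int (ra \<alpha>)" by linarith
    then have "of_int r \<le> real (ra \<alpha>) - 1" by linarith
    then show ?thesis using M1[OF that(1,2,5)] by linarith
  qed
  have M3: "wR ` A \<subseteq> R"
  proof
    fix y assume y: "y \<in> wR ` A"
    have key: "(\<alpha> \<bullet> x0 < real k \<and> \<alpha> \<bullet> y < real k) \<or> (\<alpha> \<bullet> x0 > real k \<and> \<alpha> \<bullet> y > real k)"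
      if a: "\<alpha> \<in> \<Phi>" "k \<le> m" for \<alpha> k
    proof (cases "ispos \<alpha>")
      case True
      have ne: "\<alpha> \<bullet> x0 \<noteq> real k" using R_U[OF x0_R a] .
      show ?thesis
      proof (cases "\<alpha> \<bullet> x0 < real k")
        case True
        have "\<forall>x\<in>R. \<alpha> \<bullet> x < real k" using side[OF _ x0_R a] True by blast
        then have "\<alpha> \<in> J k" unfolding J_def phi_chain_def using posr[OF a(1) \<open>ispos \<alpha>\<close>] by auto
        then have "ra \<alpha> \<le> k" using ra_le a(2) by blast
        then have "\<alpha> \<bullet> y < real k" using M1[OF a(1) \<open>ispos \<alpha>\<close> y] by linarith
        then show ?thesis using True by simp
      next
        case False
        then have "\<alpha> \<bullet> x0 > of_int (int k)" using ne by simp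
        then have "\<alpha> \<bullet> y > of_int (int k)" using M2[OF a(1) \<open>ispos \<alpha>\<close> x0_R _ y] by blast
        then show ?thesis using False ne by simp
      qed
    next
      case False
      have g: "ispos (- \<alpha>)" "- \<alpha> \<in> \<Phi>" using pos_or_neg[OF a(1) False] by auto
      have "(- \<alpha>) \<bullet> x0 > 0" using R_dom[OF x0_R g(2,1)] .
      then have "(- \<alpha>) \<bullet> y > of_int 0" using M2[OF g(2,1) x0_R _ y, of 0] by simp
      then have "\<alpha> \<bullet> y < real k" by simp
      moreover have "\<alpha> \<bullet> x0 < real k" using \<open>(- \<alpha>) \<bullet> x0 > 0\<close> by simp
      ultimately show ?thesis by simp
    qed
    have "closed_segment x0 y \<subseteq> U"
    proof
      fix z assume "z \<in> closed_segment x0 y"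
      then obtain u where u: "0 \<le> u" "u \<le> 1" "z = (1 - u) *\<^sub>R x0 + u *\<^sub>R y" by (auto simp: in_segment)
      have "\<alpha> \<bullet> z \<noteq> real k" if a: "\<alpha> \<in> \<Phi>" "k \<le> m" for \<alpha> k
      proof -
        have "\<alpha> \<bullet> z = (1 - u) * (\<alpha> \<bullet> x0) + u * (\<alpha> \<bullet> y)" unfolding u(3) by (simp add: inner_add_right)
        then show ?thesis using seg_side[OF u(1,2) key[OF a]] by simp
      qed
      then show "z \<in> U" unfolding U_iff by auto
    qed
    then have "closed_segment x0 y \<subseteq> R"
      using connected_component_maximal[OF ends_in_segment(1) connected_segment] x0_prop(2) by metis
    then show "y \<in> R" by auto
  qed
  have part1: "wR ` A \<subseteq> R \<and>
          (\<forall>\<alpha>\<in>pos_roots \<Phi> S. \<forall>r::int. (\<exists>x\<in>R. \<alpha> \<bullet> x > real_of_int r) \<longrightarrow>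
              (\<forall>x\<in>wR ` A. \<alpha> \<bullet> x > real_of_int r))"
  proof (intro conjI ballI allI impI)
    show "wR ` A \<subseteq> R" by (rule M3)
    fix \<alpha> r y assume a: "\<alpha> \<in> pos_roots \<Phi> S" and ex: "\<exists>x\<in>R. \<alpha> \<bullet> x > real_of_int r" and y: "y \<in> wR ` A"
    from ex obtain x where x: "x \<in> R" "\<alpha> \<bullet> x > real_of_int r" by blast
    show "\<alpha> \<bullet> y > real_of_int r" using M2[OF _ _ x y] posr_D[OF a] by blast
  qed
  have part2: "w = wR" if w: "w \<in> affine_weyl \<Phi>" and wA: "w ` A \<subseteq> R"
    and Mw: "\<forall>\<alpha>\<in>pos_roots \<Phi> S. \<forall>r::int. (\<exists>x\<in>R. \<alpha> \<bullet> x > real_of_int r) \<longrightarrow>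
                 (\<forall>x\<in>w ` A. \<alpha> \<bullet> x > real_of_int r)" for w
  proof -
    obtain vs where vs: "set vs \<subseteq> AR" "w = wd vs" using weyl_words[OF w] by auto
    have wRc0: "wR c0 \<in> wR ` A" using c0_in by simp
    have U1: "real (ra \<alpha>) - 1 < \<alpha> \<bullet> y \<and> \<alpha> \<bullet> y < real (ra \<alpha>)"
      if a: "\<alpha> \<in> \<Phi>" "ispos \<alpha>" and y: "y \<in> w ` A" for \<alpha> y
    proof -
      have "\<alpha> \<bullet> y < real (ra \<alpha>)" using ra_bound[OF a] wA y by auto
      moreover have "\<alpha> \<bullet> y > of_int (int (ra \<alpha>) - 1)"
      proof -
        have "wR c0 \<in> R" using M3 wRc0 by auto
        moreover have "\<alpha> \<bullet> wR c0 > of_int (int (ra \<alpha>) - 1)" using M1[OF a wRc0] by simp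
        ultimately have "\<exists>x\<in>R. \<alpha> \<bullet> x > of_int (int (ra \<alpha>) - 1)" by blast
        from Mw[rule_format, OF posr[OF a] this] y show ?thesis by blast
      qed
      ultimately show ?thesis by simp
    qed
    have U2: "\<exists>mm::int. (\<forall>y\<in>w ` A. of_int mm < \<beta> \<bullet> y \<and> \<beta> \<bullet> y < of_int mm + 1) \<and>
                        (\<forall>y\<in>wR ` A. of_int mm < \<beta> \<bullet> y \<and> \<beta> \<bullet> y < of_int mm + 1)"
      if b: "\<beta> \<in> \<Phi>" for \<beta>
    proof (cases "ispos \<beta>")
      case True
      let ?mm = "int (ra \<beta>) - 1"
      have a1: "\<forall>y\<in>w ` A. of_int ?mm < \<beta> \<bullet> y \<and> \<beta> \<bullet> y < of_int ?mm + 1"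
      proof
        fix y assume "y \<in> w ` A"
        from U1[OF b True this] show "of_int ?mm < \<beta> \<bullet> y \<and> \<beta> \<bullet> y < of_int ?mm + 1" by simp
      qed
      have a2: "\<forall>y\<in>wR ` A. of_int ?mm < \<beta> \<bullet> y \<and> \<beta> \<bullet> y < of_int ?mm + 1"
      proof
        fix y assume "y \<in> wR ` A"
        from M1[OF b True this] show "of_int ?mm < \<beta> \<bullet> y \<and> \<beta> \<bullet> y < of_int ?mm + 1" by simp
      qed
      show ?thesis using a1 a2 by blast
    next
      case False
      have g: "ispos (- \<beta>)" "- \<beta> \<in> \<Phi>" using pos_or_neg[OF b False] by auto
      let ?mm = "- int (ra (- \<beta>))"
      have a1: "\<forall>y\<in>w ` A. of_int ?mm < \<beta> \<bullet> y \<and> \<beta> \<bullet> y < of_int ?mm + 1"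
      proof
        fix y assume "y \<in> w ` A"
        from U1[OF g(2,1) this] show "of_int ?mm < \<beta> \<bullet> y \<and> \<beta> \<bullet> y < of_int ?mm + 1" by simp
      qed
      have a2: "\<forall>y\<in>wR ` A. of_int ?mm < \<beta> \<bullet> y \<and> \<beta> \<bullet> y < of_int ?mm + 1"
      proof
        fix y assume "y \<in> wR ` A"
        from M1[OF g(2,1) this] show "of_int ?mm < \<beta> \<bullet> y \<and> \<beta> \<bullet> y < of_int ?mm + 1" by simp
      qed
      show ?thesis using a1 a2 by blast
    qed
    have rwsA: "set (rev ws) \<subseteq> AR" using ws(1) by simp
    have gA: "wd (rev ws @ vs) c0 \<in> A"
    proof (rule A_intro, intro ballI impI)
      fix \<alpha> assume a: "\<alpha> \<in> \<Phi>" "ispos \<alpha>"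
      have a0: "(\<alpha>, 0) \<in> AR" using a by (simp add: AR_iff)
      obtain \<beta> n where bn: "pull (rev ws) (\<alpha>, 0) = (\<beta>, n)" by (cases "pull (rev ws) (\<alpha>, 0)")
      have bA: "\<beta> \<in> \<Phi>" using pull_AR[OF rwsA a0] bn by (simp add: AR_iff)
      have e: "\<alpha> \<bullet> wd (rev ws) z = \<beta> \<bullet> z - of_int n" for z
        using ev_wd[OF rwsA a0, of z] bn by (simp add: ev_def)
      obtain mm where mm: "\<forall>y\<in>w ` A. of_int mm < \<beta> \<bullet> y \<and> \<beta> \<bullet> y < of_int mm + 1"
        "\<forall>y\<in>wR ` A. of_int mm < \<beta> \<bullet> y \<and> \<beta> \<bullet> y < of_int mm + 1" using U2[OF bA] by blast
      have "wd (rev ws) (wR c0) = c0" using wd_rev1[OF ws(1)] ws(2) by simp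
      then have "\<alpha> \<bullet> c0 = \<beta> \<bullet> wR c0 - of_int n" using e[of "wR c0"] by simp
      then have c: "0 < \<beta> \<bullet> wR c0 - of_int n" "\<beta> \<bullet> wR c0 - of_int n < 1" using inA[OF c0_in a] by auto
      have "of_int mm < \<beta> \<bullet> wR c0" "\<beta> \<bullet> wR c0 < of_int mm + 1" using mm(2) wRc0 by auto
      then have "of_int mm < (of_int n + 1 :: real)" "of_int n < (of_int mm + 1 :: real)" using c by linarith+
      then have "mm < n + 1" "n < mm + 1" by linarith+
      then have mn: "mm = n" by simp
      have wc0: "w c0 \<in> w ` A" using c0_in by simp
      have "wd (rev ws @ vs) c0 = wd (rev ws) (w c0)" using vs(2) by (simp add: wd_append)
      then have "\<alpha> \<bullet> wd (rev ws @ vs) c0 = \<beta> \<bullet> w c0 - of_int n" using e by simp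
      then show "0 < \<alpha> \<bullet> wd (rev ws @ vs) c0 \<and> \<alpha> \<bullet> wd (rev ws @ vs) c0 < 1"
        using mm(1) wc0 mn by auto
    qed
    have gid: "wd (rev ws @ vs) = id" using free[OF _ gA] rwsA vs(1) by simp
    have "w x = wR x" for x
    proof -
      have "w x = wd ws (wd (rev ws) (wd vs x))" using wd_rev2[OF ws(1)] vs(2) by simp
      also have "wd (rev ws) (wd vs x) = wd (rev ws @ vs) x" by (simp add: wd_append)
      also have "\<dots> = x" using gid by simp
      finally show ?thesis using ws(2) by simp
    qed
    then show ?thesis by auto
  qed
  show ?thesis
  proof (rule conjI[OF part1], intro ballI impI)
    fix w assume "w \<in> affine_weyl \<Phi>" and c: "w ` A \<subseteq> R \<and>
             (\<forall>\<alpha>\<in>pos_roots \<Phi> S. \<forall>r::int. (\<exists>x\<in>R. \<alpha> \<bullet> x > real_of_int r) \<longrightarrow>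
                 (\<forall>x\<in>w ` A. \<alpha> \<bullet> x > real_of_int r))"
    then show "w = wR" using part2 by blast
  qed
qed

end

theorem proposition3p7:
  fixes \<Phi> S :: "'a::euclidean_space set" and h :: 'a and m :: nat
    and R :: "'a set" and wR :: "'a \<Rightarrow> 'a"
  assumes "crystallographic_root_system \<Phi>" and "irreducible_rs \<Phi>"
    and "simple_system \<Phi> S" and "highest_root \<Phi> S h" and "m \<ge> 1"
    and "is_region \<Phi> m R" and "dominant \<Phi> S R" and "bounded R"
    and "wR \<in> affine_weyl \<Phi>"
    and "\<forall>\<alpha>\<in>pos_roots \<Phi> S.
           r_of (fund_alcove S h) wR \<alpha> = int (r_alpha (phi_chain \<Phi> S R) m \<alpha>)"
  shows "(wR ` fund_alcove S h \<subseteq> R \<and>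
          (\<forall>\<alpha>\<in>pos_roots \<Phi> S. \<forall>r::int. (\<exists>x\<in>R. \<alpha> \<bullet> x > real_of_int r) \<longrightarrow>
              (\<forall>x\<in>wR ` fund_alcove S h. \<alpha> \<bullet> x > real_of_int r)))
       \<and> (\<forall>w\<in>affine_weyl \<Phi>.
            (w ` fund_alcove S h \<subseteq> R \<and>
             (\<forall>\<alpha>\<in>pos_roots \<Phi> S. \<forall>r::int. (\<exists>x\<in>R. \<alpha> \<bullet> x > real_of_int r) \<longrightarrow>
                 (\<forall>x\<in>w ` fund_alcove S h. \<alpha> \<bullet> x > real_of_int r)))
            \<longrightarrow> w = wR)"
proof -
  interpret reg \<Phi> S h m R
    using assms by unfold_locales auto
  have hyp: "\<forall>\<alpha>\<in>pos_roots \<Phi> S. r_of A wR \<alpha> = int (ra \<alpha>)"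
    using assms(10) by (simp add: A_def J_def ra_def)
  show ?thesis using main[OF assms(9) hyp] unfolding A_def .
qed

end
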